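(* Let $d\in\{1,2\}$, and set $a_{N,1}=(c^2_{N,1}N^{1/2})^{-1/2}$ and $a_{N,2}=(c^2_{N,2}\log N)^{-1/2}$. Let $R_N=Z(N)-1-\sum_{k=1}^N f_k$, where $f_k=c_{N,d}\sum_{x\in\mathbb{Z}^d}h(k,x)p_0(k,x)$. Then $a_{N,d}R_N\Rightarrow 0$ as $N\to\infty$ (convergence in distribution under $Q$).
   Context: For $N\ge1$, $P^N_0$ is the uniform probability measure on nearest-neighbour walks $\omega:\{0,\dots,N\}\to\mathbb{Z}^d$ with $\omega(0)=0$, $|\omega(n)-\omega(n-1)|=1$; $p_0(n,x)$ is the probability that simple random walk started at $0$ is at $x$ at time $n$. The environment $h=\{h(n,x)\}$ is i.i.d. with $h(n,x)=\pm1$ each with probability $1/2$ on $(H,\mathcal{G},Q)$, independent of the walk. $(c_{N,d})$ is a sequence of positive numbers with $\lim_{N\to\infty}c_{N,1}^2N^{1/2}=0$ for $d=1$ and $\lim_{N\to\infty}c_{N,2}^2\log N=0$ for $d=2$. $Z(N)=\int\prod_{n=1}^N[1+c_{N,d}h(n,\omega(n))]\,dP^N_0(\omega)$. *)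

theory Defs
  imports "HOL-Probability.Probability"
begin

text \<open>Points of Z^d are integer lists of length d. Nearest neighbours: l1-distance 1.\<close>
definition nn :: "nat \<Rightarrow> int list \<Rightarrow> int list \<Rightarrow> bool" where
  "nn d x y \<longleftrightarrow> length x = d \<and> length y = d \<and> (\<Sum>i<d. \<bar>x ! i - y ! i\<bar>) = 1"

text \<open>Nearest-neighbour walks omega(0),...,omega(N) in Z^d started at the origin,
  represented as lists of length N+1 (entry n is omega(n)).\<close>
definition walks :: "nat \<Rightarrow> nat \<Rightarrow> int list list set" where
  "walks d N = {w. length w = N + 1 \<and> w ! 0 = replicate d 0 \<and>
                   (\<forall>n\<in>{1..N}. nn d (w ! (n - 1)) (w ! n))}"

definition P0 :: "nat \<Rightarrow> nat \<Rightarrow> int list list pmf" where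
  "P0 d N = pmf_of_set (walks d N)"

definition p0 :: "nat \<Rightarrow> nat \<Rightarrow> int list \<Rightarrow> real" where
  "p0 d n x = measure_pmf.prob (P0 d n) {w. w ! n = x}"

definition Zpart :: "nat \<Rightarrow> (nat \<Rightarrow> real) \<Rightarrow> (nat \<Rightarrow> int list \<Rightarrow> 'w \<Rightarrow> real) \<Rightarrow> nat \<Rightarrow> 'w \<Rightarrow> real" where
  "Zpart d c h N \<omega> = measure_pmf.expectation (P0 d N)
       (\<lambda>w. \<Prod>n\<in>{1..N}. (1 + c N * h n (w ! n) \<omega>))"

definition fk :: "nat \<Rightarrow> (nat \<Rightarrow> real) \<Rightarrow> (nat \<Rightarrow> int list \<Rightarrow> 'w \<Rightarrow> real) \<Rightarrow> nat \<Rightarrow> nat \<Rightarrow> 'w \<Rightarrow> real" where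
  "fk d c h N k \<omega> = c N * (\<Sum>\<^sub>\<infinity>x\<in>{x::int list. length x = d}. h k x \<omega> * p0 d k x)"

definition RN :: "nat \<Rightarrow> (nat \<Rightarrow> real) \<Rightarrow> (nat \<Rightarrow> int list \<Rightarrow> 'w \<Rightarrow> real) \<Rightarrow> nat \<Rightarrow> 'w \<Rightarrow> real" where
  "RN d c h N \<omega> = Zpart d c h N \<omega> - 1 - (\<Sum>k\<in>{1..N}. fk d c h N k \<omega>)"

definition aN :: "nat \<Rightarrow> (nat \<Rightarrow> real) \<Rightarrow> nat \<Rightarrow> real" where
  "aN d c N = (if d = 1 then ((c N)\<^sup>2 * real N powr (1/2)) powr (-1/2)
               else ((c N)\<^sup>2 * ln (real N)) powr (-1/2))"

end

theory Submission
  imports Defs "HOL-Analysis.Harmonic_Numbers"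
begin


definition vadd :: "int list \<Rightarrow> int list \<Rightarrow> int list" where
  "vadd x y = map2 (+) x y"

definition steps :: "nat \<Rightarrow> int list set" where
  "steps d = (if d = 1 then {[1],[-1]} else {[1,0],[-1,0],[0,1],[0,-1]})"

lemma length_vadd[simp]: "length (vadd x y) = min (length x) (length y)"
  by (simp add: vadd_def)

lemma nth_vadd[simp]: "i < length x \<Longrightarrow> i < length y \<Longrightarrow> vadd x y ! i = x ! i + y ! i"
  by (simp add: vadd_def)

lemma vadd_zero: "length s = d \<Longrightarrow> vadd (replicate d 0) s = s"
  by (rule nth_equalityI) auto

lemma vadd_assoc: "length a = length b \<Longrightarrow> length b = length c \<Longrightarrow>
   vadd (vadd a b) c = vadd a (vadd b c)"
  by (rule nth_equalityI) auto

lemma vadd_cancel: "length a = length b \<Longrightarrow> length b = length c \<Longrightarrow>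
   vadd a b = vadd a c \<longleftrightarrow> b = c"
proof
  assume "length a = length b" "length b = length c" "vadd a b = vadd a c"
  then show "b = c"
  proof (intro nth_equalityI)
    fix i assume "i < length b"
    then have "vadd a b ! i = vadd a c ! i" using \<open>vadd a b = vadd a c\<close> by simp
    then show "b ! i = c ! i" using \<open>i < length b\<close> \<open>length a = length b\<close> \<open>length b = length c\<close> by simp
  qed (simp add: \<open>length b = length c\<close>)
qed auto

lemma finite_steps[simp]: "finite (steps d)" by (simp add: steps_def)
lemma steps_ne[simp]: "steps d \<noteq> {}" by (simp add: steps_def)
lemma length_steps: "d \<in> {1,2} \<Longrightarrow> s \<in> steps d \<Longrightarrow> length s = d"
  by (auto simp: steps_def)

lemma nbr_eq:
  assumes d: "d \<in> {1,2}" and x: "length x = d"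
  shows "{y. nn d x y} = vadd x ` steps d"
proof (cases "d = 1")
  case True
  then obtain a where xa: "x = [a]" using x by (auto simp: length_Suc_conv)
  have "nn d x y \<longleftrightarrow> y = [a+1] \<or> y = [a-1]" for y
  proof
    assume "nn d x y"
    then obtain b where "y = [b]" "\<bar>a - b\<bar> = 1" using True xa
      by (auto simp: nn_def length_Suc_conv)
    then show "y = [a+1] \<or> y = [a-1]" by auto
  qed (auto simp: nn_def True xa)
  then show ?thesis using True xa by (auto simp: steps_def vadd_def)
next
  case False
  then have d2: "d = 2" using d by auto
  then obtain a b where xa: "x = [a,b]" using x by (auto simp: length_Suc_conv numeral_2_eq_2)
  have "nn d x y \<longleftrightarrow> y = [a+1,b] \<or> y = [a-1,b] \<or> y = [a,b+1] \<or> y = [a,b-1]" for y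
  proof
    assume "nn d x y"
    then obtain e f where "y = [e,f]" "\<bar>a - e\<bar> + \<bar>b - f\<bar> = 1" using d2 xa
      by (auto simp: nn_def length_Suc_conv numeral_2_eq_2 lessThan_Suc)
    then show "y = [a+1,b] \<or> y = [a-1,b] \<or> y = [a,b+1] \<or> y = [a,b-1]" by auto
  qed (auto simp: nn_def d2 xa numeral_2_eq_2 lessThan_Suc)
  then show ?thesis using d2 xa by (auto simp: steps_def vadd_def)
qed

notation bind_pmf (infixl "\<bind>\<^sub>P" 54)

fun W :: "nat \<Rightarrow> nat \<Rightarrow> int list list pmf" where
  "W d 0 = return_pmf [replicate d 0]"
| "W d (Suc N) = W d N \<bind>\<^sub>P (\<lambda>w. map_pmf (\<lambda>s. w @ [vadd (last w) s]) (pmf_of_set (steps d)))"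

definition winv :: "nat \<Rightarrow> nat \<Rightarrow> int list list \<Rightarrow> bool" where
  "winv d N w \<longleftrightarrow> length w = N + 1 \<and> w ! 0 = replicate d 0 \<and> (\<forall>x\<in>set w. length x = d)"

lemma set_pmf_W:
  assumes d: "d \<in> {1,2}" shows "w \<in> set_pmf (W d N) \<Longrightarrow> winv d N w"
proof (induction N arbitrary: w)
  case 0 then show ?case by (simp add: winv_def)
next
  case (Suc N)
  then obtain u s where u: "u \<in> set_pmf (W d N)" and s: "s \<in> steps d" and w: "w = u @ [vadd (last u) s]"
    by auto
  from Suc.IH[OF u] have iu: "winv d N u" .
  then have "u \<noteq> []" by (auto simp: winv_def)
  then have "length (last u) = d" using iu by (auto simp: winv_def)
  then show ?case using iu s w length_steps[OF d s] by (auto simp: winv_def nth_append)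
qed

lemma last_nth_len: "length u = Suc N \<Longrightarrow> last u = u ! N"
  by (metis diff_Suc_1 last_conv_nth list.size(3) nat.distinct(1))

lemma walks_0: "walks d 0 = {[replicate d 0]}"
  by (auto simp: walks_def length_Suc_conv)

lemma walks_len: "w \<in> walks d N \<Longrightarrow> x \<in> set w \<Longrightarrow> length x = d"
proof -
  assume w: "w \<in> walks d N" and x: "x \<in> set w"
  then obtain i where i: "i < length w" "x = w ! i" by (auto simp: in_set_conv_nth)
  show ?thesis
  proof (cases i)
    case 0 then show ?thesis using w i by (auto simp: walks_def)
  next
    case (Suc k)
    then have "i \<in> {1..N}" using w i by (auto simp: walks_def)
    then have "nn d (w ! (i - 1)) (w ! i)" using w by (auto simp: walks_def)
    then show ?thesis using i by (simp add: nn_def)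
  qed
qed

lemma walks_Suc:
  "walks d (Suc N) = (\<Union>u\<in>walks d N. (\<lambda>y. u @ [y]) ` {y. nn d (last u) y})"
proof (intro equalityI subsetI)
  fix w assume w: "w \<in> walks d (Suc N)"
  define u where "u = butlast w"
  have lw: "length w = N + 2" using w by (simp add: walks_def)
  then have wu: "w = u @ [last w]" unfolding u_def
    by (metis append_butlast_last_id list.size(3) add_2_eq_Suc' nat.distinct(1))
  have lu: "length u = N + 1" using lw by (simp add: u_def)
  have unth: "n \<le> N \<Longrightarrow> u ! n = w ! n" for n using wu lu
    by (metis Suc_eq_plus1 le_imp_less_Suc nth_append)
  have "u \<in> walks d N" using w lu unth unfolding walks_def by auto
  moreover have "nn d (last u) (last w)"
  proof -
    have "Suc N \<in> {1..Suc N}" by simp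
    then have "nn d (w ! (Suc N - 1)) (w ! Suc N)" using w unfolding walks_def by blast
    moreover have "last u = w ! N"
    proof -
      have "u \<noteq> []" using lu by auto
      then have "last u = u ! (length u - 1)" by (rule last_conv_nth)
      then show ?thesis using lu unth[of N] by simp
    qed
    moreover have "last w = w ! Suc N"
    proof -
      have "w \<noteq> []" using lw by auto
      then have "last w = w ! (length w - 1)" by (rule last_conv_nth)
      then show ?thesis using lw by simp
    qed
    ultimately show ?thesis by simp
  qed
  ultimately show "w \<in> (\<Union>u\<in>walks d N. (\<lambda>y. u @ [y]) ` {y. nn d (last u) y})"
    using wu by blast
next
  fix w assume "w \<in> (\<Union>u\<in>walks d N. (\<lambda>y. u @ [y]) ` {y. nn d (last u) y})"
  then obtain u y where u: "u \<in> walks d N" and y: "nn d (last u) y" and w: "w = u @ [y]" by auto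
  have lu: "length u = N + 1" using u by (simp add: walks_def)
  show "w \<in> walks d (Suc N)" unfolding walks_def
  proof (intro CollectI conjI ballI)
    show "length w = Suc N + 1" using lu w by simp
    show "w ! 0 = replicate d 0" using u lu w by (simp add: walks_def nth_append)
    fix n assume n: "n \<in> {1..Suc N}"
    show "nn d (w ! (n - 1)) (w ! n)"
    proof (cases "n = Suc N")
      case True
      then have "w ! (n - 1) = last u" "w ! n = y" using lu w by (auto simp: nth_append last_nth_len)
      then show ?thesis using y by simp
    next
      case False
      then have "n \<in> {1..N}" using n by auto
      then show ?thesis using u lu w by (auto simp: walks_def nth_append)
    qed
  qed
qed

lemma last_walk_len: "u \<in> walks d N \<Longrightarrow> length (last u) = d"
proof -
  assume u: "u \<in> walks d N"
  then have "u \<noteq> []" by (auto simp: walks_def)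
  then show ?thesis using walks_len[OF u] by simp
qed

lemma finite_walks: "d \<in> {1,2} \<Longrightarrow> finite (walks d N) \<and> walks d N \<noteq> {}"
proof (induction N)
  case 0 then show ?case by (simp add: walks_0)
next
  case (Suc N)
  have "finite (walks d (Suc N))" unfolding walks_Suc using Suc
    by (auto simp: nbr_eq last_walk_len)
  moreover obtain u where "u \<in> walks d N" using Suc by auto
  then have "walks d (Suc N) \<noteq> {}" unfolding walks_Suc using Suc
    by (auto simp: nbr_eq last_walk_len)
  ultimately show ?case by blast
qed

lemma P0_W: assumes d: "d \<in> {1,2}" shows "P0 d N = W d N"
proof (induction N)
  case 0 then show ?case by (simp add: P0_def walks_0 pmf_of_set_singleton)
next
  case (Suc N)
  have fw: "finite (walks d N)" "walks d N \<noteq> {}" using finite_walks[OF d] by auto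
  have img: "(\<lambda>y. u @ [y]) ` {y. nn d (last u) y} = (\<lambda>s. u @ [vadd (last u) s]) ` steps d"
    if "u \<in> walks d N" for u
    using nbr_eq[OF d last_walk_len[OF that]] by auto
  have inj: "inj_on (\<lambda>s. u @ [vadd (last u) s]) (steps d)" if "u \<in> walks d N" for u
    using vadd_cancel[of "last u"] last_walk_len[OF that] length_steps[OF d]
    by (auto simp: inj_on_def)
  have "P0 d (Suc N) = pmf_of_set (\<Union>u\<in>walks d N. (\<lambda>s. u @ [vadd (last u) s]) ` steps d)"
    unfolding P0_def walks_Suc using img by (simp cong: SUP_cong)
  also have "\<dots> = pmf_of_set (walks d N) \<bind>\<^sub>P (\<lambda>u. pmf_of_set ((\<lambda>s. u @ [vadd (last u) s]) ` steps d))"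
  proof (rule pmf_of_set_UN)
    show "finite (\<Union>u\<in>walks d N. (\<lambda>s. u @ [vadd (last u) s]) ` steps d)" using fw by auto
    show "card ((\<lambda>s. u @ [vadd (last u) s]) ` steps d) = card (steps d)" if "u \<in> walks d N" for u
      using card_image[OF inj[OF that]] .
    show "disjoint_family_on (\<lambda>u. (\<lambda>s. u @ [vadd (last u) s]) ` steps d) (walks d N)"
      by (auto simp: disjoint_family_on_def)
  qed (use fw in auto)
  also have "\<dots> = W d N \<bind>\<^sub>P (\<lambda>u. map_pmf (\<lambda>s. u @ [vadd (last u) s]) (pmf_of_set (steps d)))"
    unfolding P0_def[symmetric] Suc.IH[symmetric]
    by (intro bind_pmf_cong refl map_pmf_of_set_inj[symmetric] inj)
       (auto simp: P0_def set_pmf_of_set[OF fw(2,1)])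
  finally show ?case by simp
qed


definition cat :: "int list list \<Rightarrow> int list list \<Rightarrow> int list list" where
  "cat u v = u @ map (vadd (last u)) (tl v)"

lemma winv_last: "winv d N w \<Longrightarrow> length (last w) = d"
proof -
  assume "winv d N w"
  moreover then have "w \<noteq> []" by (auto simp: winv_def)
  ultimately show ?thesis by (auto simp: winv_def)
qed

lemma W_add:
  assumes d: "d \<in> {1,2}"
  shows "W d (m + j) = W d m \<bind>\<^sub>P (\<lambda>u. map_pmf (cat u) (W d j))"
proof (induction j)
  case 0
  have "W d m \<bind>\<^sub>P (\<lambda>u. map_pmf (cat u) (W d 0)) = W d m \<bind>\<^sub>P return_pmf"
    by (intro bind_pmf_cong) (auto simp: cat_def)
  then show ?case by (simp add: bind_return_pmf')
next
  case (Suc j)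
  let ?S = "pmf_of_set (steps d)"
  have "W d (m + Suc j) = (W d m \<bind>\<^sub>P (\<lambda>u. map_pmf (cat u) (W d j))) \<bind>\<^sub>P
          (\<lambda>w. map_pmf (\<lambda>s. w @ [vadd (last w) s]) ?S)"
    using Suc by simp
  also have "\<dots> = W d m \<bind>\<^sub>P (\<lambda>u. W d j \<bind>\<^sub>P (\<lambda>v. map_pmf (\<lambda>s. cat u v @ [vadd (last (cat u v)) s]) ?S))"
    by (simp only: bind_assoc_pmf bind_map_pmf)
  also have "\<dots> = W d m \<bind>\<^sub>P (\<lambda>u. W d j \<bind>\<^sub>P (\<lambda>v. map_pmf (\<lambda>s. cat u (v @ [vadd (last v) s])) ?S))"
  proof (intro bind_pmf_cong refl map_pmf_cong)
    fix u v s assume u: "u \<in> set_pmf (W d m)" and v: "v \<in> set_pmf (W d j)" and s: "s \<in> set_pmf ?S"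
    have iu: "winv d m u" and iv: "winv d j v" using set_pmf_W[OF d] u v by auto
    have s': "s \<in> steps d" using s by simp
    have ls: "length s = d" using length_steps[OF d s'] .
    have lu: "length (last u) = d" using iu by (rule winv_last)
    have lv: "length (last v) = d" using iv by (rule winv_last)
    have vne: "v \<noteq> []" using iv by (auto simp: winv_def)
    have "last (cat u v) = vadd (last u) (last v)"
    proof (cases "tl v = []")
      case True
      then have "v = [v ! 0]" using vne by (cases v) auto
      then have "last v = replicate d 0" using iv by (auto simp: winv_def)
      moreover have "vadd (last u) (replicate d 0) = last u"
        using lu by (intro nth_equalityI) auto
      ultimately show ?thesis using True by (simp add: cat_def)
    next
      case False
      then show ?thesis using vne by (simp add: cat_def last_map last_tl)
    qed
    then show "cat u v @ [vadd (last (cat u v)) s] = cat u (v @ [vadd (last v) s])"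
      using vne lu lv ls by (simp add: cat_def vadd_assoc)
  qed
  also have "\<dots> = W d m \<bind>\<^sub>P (\<lambda>u. map_pmf (cat u) (W d (Suc j)))"
    by (simp add: map_bind_pmf map_pmf_comp)
  finally show ?case .
qed

lemma winv_len: "winv d N w \<Longrightarrow> length w = Suc N" by (simp add: winv_def)

lemma take_cat: "length u = Suc k \<Longrightarrow> take (Suc k) (cat u v) = u"
  by (simp add: cat_def)

lemma W_prefix:
  assumes d: "d \<in> {1,2}" and k: "k \<le> N"
  shows "map_pmf (take (Suc k)) (W d N) = W d k"
proof -
  have N: "N = k + (N - k)" using k by simp
  have "map_pmf (take (Suc k)) (W d N) = W d k \<bind>\<^sub>P (\<lambda>u. map_pmf (take (Suc k)) (map_pmf (cat u) (W d (N - k))))"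
    by (subst N, subst W_add[OF d]) (simp add: map_bind_pmf)
  also have "\<dots> = W d k \<bind>\<^sub>P return_pmf"
  proof (intro bind_pmf_cong refl)
    fix u assume u: "u \<in> set_pmf (W d k)"
    then have "length u = Suc k" using set_pmf_W[OF d u] by (simp add: winv_def)
    then have "map_pmf (take (Suc k)) (map_pmf (cat u) (W d (N - k))) = map_pmf (\<lambda>_. u) (W d (N - k))"
      by (simp add: map_pmf_comp take_cat)
    then show "map_pmf (take (Suc k)) (map_pmf (cat u) (W d (N - k))) = return_pmf u"
      by (simp add: map_pmf_const)
  qed
  finally show ?thesis by (simp add: bind_return_pmf')
qed

lemma prob_prefix:
  assumes d: "d \<in> {1,2}" and k: "k \<le> N"
  shows "measure_pmf.prob (W d N) {w. P (take (Suc k) w)} = measure_pmf.prob (W d k) {u. P u}"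
proof -
  have "measure_pmf.prob (W d k) {u. P u} = measure_pmf.prob (map_pmf (take (Suc k)) (W d N)) {u. P u}"
    by (simp add: W_prefix[OF d k])
  also have "\<dots> = measure_pmf.prob (W d N) {w. P (take (Suc k) w)}"
    by (simp add: vimage_def)
  finally show ?thesis by simp
qed

lemma map_nth_prefix:
  assumes d: "d \<in> {1,2}" and k: "k \<le> N"
  shows "map_pmf (\<lambda>w. w ! k) (W d N) = map_pmf (\<lambda>w. w ! k) (W d k)"
proof -
  have "map_pmf (\<lambda>w. w ! k) (W d N) = map_pmf (\<lambda>w. w ! k) (map_pmf (take (Suc k)) (W d N))"
    by (simp add: map_pmf_comp)
  then show ?thesis by (simp add: W_prefix[OF d k])
qed

definition D :: "nat \<Rightarrow> nat \<Rightarrow> nat set \<Rightarrow> real" where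
  "D d N A = measure_pmf.prob (pair_pmf (W d N) (W d N)) {p. \<forall>n\<in>A. fst p ! n = snd p ! n}"

lemma bind_map_pair: "A \<bind>\<^sub>P (\<lambda>u. map_pmf (f u) B) = map_pmf (\<lambda>(u,v). f u v) (pair_pmf A B)"
  by (simp add: pair_pmf_def map_bind_pmf map_pmf_def bind_assoc_pmf bind_return_pmf)

lemma swap4: "pair_pmf (pair_pmf A B) (pair_pmf C E) =
  map_pmf (\<lambda>((a,c),(b,e)). ((a,b),(c,e))) (pair_pmf (pair_pmf A C) (pair_pmf B E))"
proof (rule pmf_eqI)
  fix z :: "('a \<times> 'b) \<times> ('c \<times> 'd)"
  obtain a b c e where z: "z = ((a,b),(c,e))" by (metis prod.collapse)
  have inj: "inj (\<lambda>((a::'a,c::'c),(b::'b,e::'d)). ((a,b),(c,e)))" by (auto simp: inj_def)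
  have "z = (\<lambda>((a,c),(b,e)). ((a,b),(c,e))) ((a,c),(b,e))" by (simp add: z)
  then have "pmf (map_pmf (\<lambda>((a,c),(b,e)). ((a,b),(c,e))) (pair_pmf (pair_pmf A C) (pair_pmf B E))) z
     = pmf (pair_pmf (pair_pmf A C) (pair_pmf B E)) ((a,c),(b,e))"
    using pmf_map_inj'[OF inj] by metis
  then show "pmf (pair_pmf (pair_pmf A B) (pair_pmf C E)) z = pmf (map_pmf (\<lambda>((a,c),(b,e)). ((a,b),(c,e))) (pair_pmf (pair_pmf A C) (pair_pmf B E))) z"
    by (simp add: z pmf_pair)
qed

lemma prob_cong_support:
  assumes "\<And>x. x \<in> set_pmf M \<Longrightarrow> x \<in> X \<longleftrightarrow> x \<in> Y"
  shows "measure_pmf.prob M X = measure_pmf.prob M Y"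
proof -
  have "X \<inter> set_pmf M = Y \<inter> set_pmf M" using assms by auto
  then show ?thesis by (metis measure_Int_set_pmf)
qed

lemma nth_cat_hi: "length u = Suc a \<Longrightarrow> length v = Suc j \<Longrightarrow> a < n \<Longrightarrow> n \<le> a + j \<Longrightarrow>
   cat u v ! n = vadd (last u) (v ! (n - a))"
proof -
  assume "length u = Suc a" "length v = Suc j" "a < n" "n \<le> a + j"
  moreover have "Suc (n - Suc a) = n - a" using \<open>a < n\<close> by simp
  ultimately show ?thesis by (simp add: cat_def nth_append nth_tl)
qed

lemma nth_cat_lo: "length u = Suc a \<Longrightarrow> n \<le> a \<Longrightarrow> cat u v ! n = u ! n"
  by (simp add: cat_def nth_append)

lemma D_markov:
  assumes d: "d \<in> {1,2}" and A: "finite A" "A \<noteq> {}" "A \<subseteq> {1..N}" and a: "a = Min A"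
  shows "D d N A = D d a {a} * D d (N - a) ((\<lambda>n. n - a) ` (A - {a}))"
proof -
  define j where "j = N - a"
  have aA: "a \<in> A" using A a by simp
  have aN: "a \<le> N" using aA A by auto
  have N: "N = a + j" using aN by (simp add: j_def)
  have amin: "n \<in> A \<Longrightarrow> a \<le> n" for n using A a by simp
  let ?F = "\<lambda>((u,u'),(v,v')). (cat u v, cat u' v')"
  have WN: "W d N = map_pmf (\<lambda>(u,v). cat u v) (pair_pmf (W d a) (W d j))"
    by (subst N, subst W_add[OF d]) (simp add: bind_map_pair)
  have "pair_pmf (W d N) (W d N) = map_pmf (\<lambda>(x,y). ((\<lambda>(u,v). cat u v) x, (\<lambda>(u,v). cat u v) y))
      (pair_pmf (pair_pmf (W d a) (W d j)) (pair_pmf (W d a) (W d j)))"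
    unfolding WN by (simp add: map_pair)
  also have "\<dots> = map_pmf ?F (pair_pmf (pair_pmf (W d a) (W d a)) (pair_pmf (W d j) (W d j)))"
    by (subst swap4) (simp add: pmf.map_comp o_def case_prod_unfold)
  finally have P: "pair_pmf (W d N) (W d N) = map_pmf ?F (pair_pmf (pair_pmf (W d a) (W d a)) (pair_pmf (W d j) (W d j)))" .
  define E1 where "E1 = {p::int list list \<times> int list list. \<forall>n\<in>{a}. fst p ! n = snd p ! n}"
  define E2 where "E2 = {p::int list list \<times> int list list. \<forall>n\<in>(\<lambda>n. n - a) ` (A - {a}). fst p ! n = snd p ! n}"
  have "D d N A = measure_pmf.prob (pair_pmf (pair_pmf (W d a) (W d a)) (pair_pmf (W d j) (W d j)))
      (?F -` {p. \<forall>n\<in>A. fst p ! n = snd p ! n})"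
    unfolding D_def P by simp
  also have "\<dots> = measure_pmf.prob (pair_pmf (pair_pmf (W d a) (W d a)) (pair_pmf (W d j) (W d j))) (E1 \<times> E2)"
  proof (rule prob_cong_support)
    fix x assume x: "x \<in> set_pmf (pair_pmf (pair_pmf (W d a) (W d a)) (pair_pmf (W d j) (W d j)))"
    then obtain u u' v v' where xx: "x = ((u,u'),(v,v'))" and
      u: "winv d a u" and u': "winv d a u'" and v: "winv d j v" and v': "winv d j v'"
      using set_pmf_W[OF d] by (cases x) auto
    have lu: "length u = Suc a" "length u' = Suc a" "length v = Suc j" "length v' = Suc j"
      using u u' v v' by (auto simp: winv_def)
    have lastu: "last u = u ! a" "last u' = u' ! a" using lu by (auto simp: last_nth_len)
    have ll: "length (last u) = d" "length (last u') = d" using u u' by (auto intro: winv_last)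
    have lv: "m \<le> j \<Longrightarrow> length (v ! m) = d \<and> length (v' ! m) = d" for m
      using v v' lu by (auto simp: winv_def)
    have key: "(\<forall>n\<in>A. cat u v ! n = cat u' v' ! n) \<longleftrightarrow>
       (u ! a = u' ! a \<and> (\<forall>m\<in>(\<lambda>n. n - a) ` (A - {a}). v ! m = v' ! m))"
    proof
      assume H: "\<forall>n\<in>A. cat u v ! n = cat u' v' ! n"
      have ua: "u ! a = u' ! a" using H[rule_format, OF aA] lu by (simp add: nth_cat_lo)
      moreover have "v ! m = v' ! m" if "m \<in> (\<lambda>n. n - a) ` (A - {a})" for m
      proof -
        from that obtain n where n: "n \<in> A - {a}" "m = n - a" by blast
        then have n: "n \<in> A" "n \<noteq> a" "m = n - a" by auto
        have an: "a < n" "n \<le> a + j" using amin[OF n(1)] n A N by auto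
        have "vadd (last u) (v ! m) = vadd (last u') (v' ! m)"
          using H[rule_format, OF n(1)] nth_cat_hi[OF lu(1) lu(3) an] nth_cat_hi[OF lu(2) lu(4) an] n by simp
        then show ?thesis using vadd_cancel[of "last u" "v ! m" "v' ! m"] lastu ua ll lv[of m] an n by auto
      qed
      ultimately show "u ! a = u' ! a \<and> (\<forall>m\<in>(\<lambda>n. n - a) ` (A - {a}). v ! m = v' ! m)" by blast
    next
      assume H: "u ! a = u' ! a \<and> (\<forall>m\<in>(\<lambda>n. n - a) ` (A - {a}). v ! m = v' ! m)"
      show "\<forall>n\<in>A. cat u v ! n = cat u' v' ! n"
      proof
        fix n assume n: "n \<in> A"
        show "cat u v ! n = cat u' v' ! n"
        proof (cases "n = a")
          case True then show ?thesis using H lu by (simp add: nth_cat_lo)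
        next
          case False
          have an: "a < n" "n \<le> a + j" using amin[OF n] n A N False by auto
          have "v ! (n - a) = v' ! (n - a)" using H n False by auto
          then show ?thesis using nth_cat_hi[OF lu(1) lu(3) an] nth_cat_hi[OF lu(2) lu(4) an] lastu H by simp
        qed
      qed
    qed
    show "x \<in> ?F -` {p. \<forall>n\<in>A. fst p ! n = snd p ! n} \<longleftrightarrow> x \<in> E1 \<times> E2"
      using key by (simp add: xx E1_def E2_def)
  qed
  also have "\<dots> = measure_pmf.prob (pair_pmf (W d a) (W d a)) E1 * measure_pmf.prob (pair_pmf (W d j) (W d j)) E2"
    by (rule measure_pmf_prob_product) auto
  finally show ?thesis by (simp add: D_def E1_def E2_def j_def)
qed


lemma central_rec: "Suc j * ((2 * Suc j) choose Suc j) = 2 * (2 * j + 1) * ((2 * j) choose j)"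
proof -
  have e: "2 * Suc j = Suc (2 * j + 1)" by simp
  have s: "(2 * j + 1) choose j = (2 * j + 1) choose Suc j"
    using binomial_symmetric[of j "2*j+1"] by simp
  have a: "Suc j * (Suc (2 * j + 1) choose Suc j) = Suc (2 * j + 1) * ((2 * j + 1) choose j)"
    by (rule Suc_times_binomial)
  have b: "Suc j * (Suc (2 * j) choose Suc j) = Suc (2 * j) * ((2 * j) choose j)"
    by (rule Suc_times_binomial)
  have "Suc j * ((2 * Suc j) choose Suc j) = Suc (2 * j + 1) * ((2 * j + 1) choose Suc j)"
    using a s e by (simp only:)
  then have "Suc j * (Suc j * ((2 * Suc j) choose Suc j)) = Suc (2 * j + 1) * (Suc j * (Suc (2 * j) choose Suc j))"
    by (simp only: mult.left_commute Suc_eq_plus1)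
  also have "\<dots> = Suc (2 * j + 1) * (Suc (2 * j) * ((2 * j) choose j))" using b by (simp only:)
  also have "\<dots> = Suc j * (2 * (2 * j + 1) * ((2 * j) choose j))" by (simp del: binomial_Suc_Suc add: algebra_simps)
  finally show ?thesis using mult_left_cancel[of "Suc j"] by blast
qed

definition cb :: "nat \<Rightarrow> real" where "cb j = real ((2 * j) choose j) / 4 ^ j"

lemma cb_Suc: "cb (Suc j) = cb j * (2 * j + 1) / (2 * j + 2)"
proof -
  define a where "a = (2 * Suc j) choose Suc j"
  define b where "b = (2 * j) choose j"
  have "real (Suc j * a) = real (2 * (2 * j + 1) * b)"
    using central_rec unfolding a_def b_def by (simp only:)
  then have "real (Suc j) * real a = 2 * (2 * j + 1) * real b" by (simp only: of_nat_mult)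
  then have "real a = 2 * (2 * j + 1) * real b / (j + 1)"
    by (simp add: field_simps)
  have "cb (Suc j) = real a / (4 * 4^j)" by (simp add: cb_def a_def)
  also have "\<dots> = (2 * (2 * j + 1) * real b / (j + 1)) / (4 * 4^j)" using \<open>real a = _\<close> by simp
  also have "\<dots> = (real b / 4^j) * (2 * j + 1) / (2 * j + 2)"
  proof -
    have p: "(4::real)^j > 0" "real j + 1 > 0" by auto
    show ?thesis using p by (simp add: divide_simps) (simp add: algebra_simps)
  qed
  finally show ?thesis by (simp add: cb_def b_def)
qed

lemma cb_nonneg: "cb j \<ge> 0" by (simp add: cb_def)

lemma cb_bound: "(cb j)\<^sup>2 \<le> 1 / (3 * real j + 1)"
proof (induction j)
  case 0 then show ?case by (simp add: cb_def)
next
  case (Suc j)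
  have "(cb (Suc j))\<^sup>2 = (cb j)\<^sup>2 * ((2 * j + 1) / (2 * j + 2))\<^sup>2"
    by (simp add: cb_Suc power_mult_distrib power_divide)
  also have "\<dots> \<le> 1 / (3 * j + 1) * ((2 * j + 1) / (2 * j + 2))\<^sup>2"
    using Suc by (intro mult_right_mono) (auto simp: add.commute)
  also have "\<dots> \<le> 1 / (3 * real (Suc j) + 1)"
  proof -
    have "(2 * real j + 1)\<^sup>2 * (3 * j + 4) \<le> (2 * real j + 2)\<^sup>2 * (3 * j + 1)"
      by (simp add: power2_eq_square algebra_simps)
    then have "(2 * real j + 1)\<^sup>2 / ((3 * j + 1) * (2 * real j + 2)\<^sup>2) \<le> 1 / (3 * j + 4)"
      by (simp add: divide_simps mult.commute)
    then show ?thesis by (simp add: power_divide algebra_simps)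
  qed
  finally show ?case .
qed


definition X :: "nat \<Rightarrow> nat \<Rightarrow> int list pmf" where "X d j = map_pmf last (W d j)"

abbreviation bern where "bern \<equiv> bernoulli_pmf (1/2)"

lemma X_Suc: "X d (Suc j) = X d j \<bind>\<^sub>P (\<lambda>x. map_pmf (vadd x) (pmf_of_set (steps d)))"
  unfolding X_def by (simp add: map_bind_pmf pmf.map_comp o_def bind_map_pmf)

lemma S1: "pmf_of_set (steps 1) = map_pmf (\<lambda>b. [if b then 1 else -1]) bern"
proof -
  have "map_pmf (\<lambda>b. [if b then 1 else -1::int]) (pmf_of_set (UNIV::bool set)) =
        pmf_of_set ((\<lambda>b. [if b then 1 else -1]) ` UNIV)"
    by (rule map_pmf_of_set_inj) (auto simp: inj_on_def)
  also have "(\<lambda>b. [if b then 1 else -1::int]) ` UNIV = steps 1" by (auto simp: steps_def UNIV_bool)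
  finally show ?thesis by (simp add: bernoulli_pmf_half_conv_pmf_of_set)
qed

definition g2 :: "bool \<times> bool \<Rightarrow> int list" where
  "g2 p = (case p of (True, True) \<Rightarrow> [1,0] | (False, False) \<Rightarrow> [-1,0] | (True, False) \<Rightarrow> [0,1] | (False, True) \<Rightarrow> [0,-1])"

lemma pair_bern: "pair_pmf bern bern = pmf_of_set UNIV"
proof (rule pmf_eqI)
  fix z :: "bool \<times> bool"
  show "pmf (pair_pmf bern bern) z = pmf (pmf_of_set UNIV) z"
    by (cases z) (simp add: pmf_pair UNIV_Times_UNIV[symmetric] card_UNIV_bool del: UNIV_Times_UNIV)
qed

lemma S2: "pmf_of_set (steps 2) = map_pmf g2 (pair_pmf bern bern)"
proof -
  have "map_pmf g2 (pmf_of_set (UNIV::(bool\<times>bool) set)) = pmf_of_set (g2 ` UNIV)"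
    by (rule map_pmf_of_set_inj) (auto simp: inj_on_def g2_def split: bool.splits)
  also have "g2 ` UNIV = steps 2"
  proof -
    have "UNIV = {(True,True),(False,False),(True,False),(False,True)}" by auto
    then have "g2 ` UNIV = g2 ` {(True,True),(False,False),(True,False),(False,True)}" by simp
    also have "\<dots> = steps 2" by (simp add: steps_def g2_def)
    finally show ?thesis .
  qed
  finally show ?thesis by (simp add: pair_bern)
qed

definition Y :: "nat \<Rightarrow> int pmf" where
  "Y j = map_pmf (\<lambda>k. 2 * int k - int j) (binomial_pmf j (1/2))"

lemma Y_Suc: "Y (Suc j) = Y j \<bind>\<^sub>P (\<lambda>u. map_pmf (\<lambda>b. u + (if b then 1 else -1)) bern)"
proof -
  have "Y (Suc j) = bern \<bind>\<^sub>P (\<lambda>b. binomial_pmf j (1/2) \<bind>\<^sub>P (\<lambda>k.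
          return_pmf (2 * int ((if b then 1 else 0) + k) - int (Suc j))))"
    unfolding Y_def by (subst binomial_pmf_Suc) (auto simp: map_bind_pmf)
  also have "\<dots> = binomial_pmf j (1/2) \<bind>\<^sub>P (\<lambda>k. bern \<bind>\<^sub>P (\<lambda>b.
          return_pmf (2 * int ((if b then 1 else 0) + k) - int (Suc j))))"
    by (rule bind_commute_pmf)
  also have "\<dots> = Y j \<bind>\<^sub>P (\<lambda>u. map_pmf (\<lambda>b. u + (if b then 1 else -1)) bern)"
    unfolding Y_def map_pmf_def bind_assoc_pmf bind_return_pmf
    by (intro bind_pmf_cong refl) auto
  finally show ?thesis .
qed

lemma X1: "X 1 j = map_pmf (\<lambda>u. [u]) (Y j)"
proof (induction j)
  case 0 then show ?case by (simp add: X_def Y_def binomial_pmf_0)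
next
  case (Suc j)
  show ?case
    unfolding X_Suc Suc Y_Suc S1 by (simp add: map_bind_pmf bind_map_pmf pmf.map_comp o_def vadd_def)
qed

definition rot :: "int list \<Rightarrow> int \<times> int" where "rot x = (x ! 0 + x ! 1, x ! 0 - x ! 1)"

lemma pair_bind_bind: "pair_pmf (A \<bind>\<^sub>P f) (B \<bind>\<^sub>P g) = pair_pmf A B \<bind>\<^sub>P (\<lambda>(a,b). pair_pmf (f a) (g b))"
  unfolding pair_pmf_def bind_assoc_pmf
  by (simp add: bind_assoc_pmf bind_return_pmf) (subst bind_commute_pmf, rule refl)

lemma len2E: assumes "length x = 2" obtains a b where "x = [a,b]"
proof -
  have "\<exists>a b. x = [a,b]" using assms by (auto simp: length_Suc_conv numeral_2_eq_2)
  then show ?thesis using that by blast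
qed

lemma X2: "map_pmf rot (X 2 j) = pair_pmf (Y j) (Y j)"
proof (induction j)
  case 0 then show ?case by (simp add: X_def Y_def binomial_pmf_0 rot_def)
next
  case (Suc j)
  have supp: "x \<in> set_pmf (X 2 j) \<Longrightarrow> length x = 2" for x
    using set_pmf_W[of 2 _ j] by (auto simp: X_def intro: winv_last)
  have "map_pmf rot (X 2 (Suc j)) = X 2 j \<bind>\<^sub>P (\<lambda>x. map_pmf (\<lambda>p. rot (vadd x (g2 p))) (pair_pmf bern bern))"
    unfolding X_Suc S2 by (simp add: map_bind_pmf pmf.map_comp o_def)
  also have "\<dots> = X 2 j \<bind>\<^sub>P (\<lambda>x. (\<lambda>(u,v). map_pmf (\<lambda>(b,c). (u + (if b then 1 else -1), v + (if c then 1 else -1))) (pair_pmf bern bern)) (rot x))"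
  proof (intro bind_pmf_cong refl)
    fix x assume "x \<in> set_pmf (X 2 j)"
    then have "length x = 2" by (rule supp)
    then obtain a b where x: "x = [a,b]" by (rule len2E)
    have r: "rot x = (a + b, a - b)" by (simp add: x rot_def)
    show "map_pmf (\<lambda>p. rot (vadd x (g2 p))) (pair_pmf bern bern) = (\<lambda>(u,v). map_pmf (\<lambda>(b,c). (u + (if b then 1 else -1), v + (if c then 1 else -1))) (pair_pmf bern bern)) (rot x)"
      unfolding r prod.case
      by (intro map_pmf_cong refl) (auto simp: x rot_def vadd_def g2_def split: bool.splits)
  qed
  also have "\<dots> = pair_pmf (Y j) (Y j) \<bind>\<^sub>P (\<lambda>(u,v). map_pmf (\<lambda>(b,c). (u + (if b then 1 else -1), v + (if c then 1 else -1))) (pair_pmf bern bern))"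
    by (simp add: bind_map_pmf[symmetric] Suc)
  also have "\<dots> = pair_pmf (Y (Suc j)) (Y (Suc j))"
    unfolding Y_Suc pair_bind_bind by (simp add: map_pair[symmetric] case_prod_unfold)
  finally show ?case .
qed

lemma diag_Y: "measure_pmf.prob (pair_pmf (Y j) (Y j)) {p. fst p = snd p} = cb j"
proof -
  let ?B = "binomial_pmf j (1/2)"
  let ?f = "\<lambda>k::nat. 2 * int k - int j"
  have "pair_pmf (Y j) (Y j) = map_pmf (\<lambda>(a,b). (?f a, ?f b)) (pair_pmf ?B ?B)"
    unfolding Y_def by (simp add: map_pair)
  then have "measure_pmf.prob (pair_pmf (Y j) (Y j)) {p. fst p = snd p}
     = measure_pmf.prob (pair_pmf ?B ?B) {p. fst p = snd p}"
    by (simp add: vimage_def case_prod_unfold)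
  also have "\<dots> = measure_pmf.prob (pair_pmf ?B ?B) ((\<lambda>k. (k,k)) ` {..j})"
    by (rule prob_cong_support) auto
  also have "\<dots> = (\<Sum>k\<le>j. pmf (pair_pmf ?B ?B) (k,k))"
    by (subst measure_measure_pmf_finite) (auto simp: sum.reindex inj_on_def)
  also have "\<dots> = (\<Sum>k\<le>j. real ((j choose k)^2) / 4^j)"
  proof (intro sum.cong refl)
    fix k assume k: "k \<in> {..j}"
    have "(1/2::real)^k * (1/2)^(j-k) = (1/2)^j" using k by (simp add: power_add[symmetric])
    then have "pmf ?B k = real (j choose k) / 2^j" by (simp add: power_one_over)
    then show "pmf (pair_pmf ?B ?B) (k,k) = real ((j choose k)^2) / 4^j"
      by (simp add: pmf_pair power2_eq_square power_mult_distrib[symmetric])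
  qed
  also have "\<dots> = real ((2*j) choose j) / 4^j"
  proof -
    have "real (\<Sum>k\<le>j. (j choose k)^2) = real ((2*j) choose j)" by (simp only: choose_square_sum)
    then have "(\<Sum>k\<le>j. real ((j choose k)^2)) = real ((2*j) choose j)" by (simp only: of_nat_sum)
    then show ?thesis by (simp add: sum_divide_distrib[symmetric])
  qed
  finally show ?thesis by (simp add: cb_def)
qed

lemma D_single_X: assumes d: "d \<in> {1,2}" shows "D d j {j} = measure_pmf.prob (pair_pmf (X d j) (X d j)) {p. fst p = snd p}"
proof -
  have "measure_pmf.prob (pair_pmf (X d j) (X d j)) {p. fst p = snd p} =
    measure_pmf.prob (pair_pmf (W d j) (W d j)) {p. last (fst p) = last (snd p)}"
    unfolding X_def by (simp add: map_pair[symmetric] vimage_def case_prod_unfold)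
  also have "\<dots> = D d j {j}" unfolding D_def
  proof (rule prob_cong_support)
    fix x assume "x \<in> set_pmf (pair_pmf (W d j) (W d j))"
    then obtain w w' where "x = (w,w')" "w \<in> set_pmf (W d j)" "w' \<in> set_pmf (W d j)" by auto
    moreover have "v \<in> set_pmf (W d j) \<Longrightarrow> last v = v ! j" for v
      using set_pmf_W[OF d, of v j] by (auto simp: winv_def last_nth_len)
    ultimately show "x \<in> {p. last (fst p) = last (snd p)} \<longleftrightarrow> x \<in> {p. \<forall>n\<in>{j}. fst p ! n = snd p ! n}" by auto
  qed
  finally show ?thesis by simp
qed

lemma q1: "D 1 j {j} = cb j"
proof -
  have "D 1 j {j} = measure_pmf.prob (pair_pmf (X 1 j) (X 1 j)) {p. fst p = snd p}"
    by (rule D_single_X) simp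
  also have "\<dots> = measure_pmf.prob (pair_pmf (Y j) (Y j)) {p. [fst p] = [snd p]}"
    unfolding X1 by (simp add: map_pair[symmetric] vimage_def case_prod_unfold)
  finally show ?thesis using diag_Y by simp
qed

lemma q2: "D 2 j {j} = (cb j)\<^sup>2"
proof -
  have "D 2 j {j} = measure_pmf.prob (pair_pmf (X 2 j) (X 2 j)) {p. fst p = snd p}"
    by (rule D_single_X) simp
  also have "\<dots> = measure_pmf.prob (pair_pmf (X 2 j) (X 2 j)) {p. rot (fst p) = rot (snd p)}"
  proof (rule prob_cong_support)
    fix x assume "x \<in> set_pmf (pair_pmf (X 2 j) (X 2 j))"
    then obtain y y' where x: "x = (y,y')" "y \<in> set_pmf (X 2 j)" "y' \<in> set_pmf (X 2 j)" by auto
    have l: "v \<in> set_pmf (X 2 j) \<Longrightarrow> length v = 2" for v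
      using set_pmf_W[of 2 _ j] by (auto simp: X_def intro: winv_last)
    obtain a b where "y = [a,b]" using l[OF x(2)] by (rule len2E)
    moreover obtain a' b' where "y' = [a',b']" using l[OF x(3)] by (rule len2E)
    ultimately show "x \<in> {p. fst p = snd p} \<longleftrightarrow> x \<in> {p. rot (fst p) = rot (snd p)}"
      using x by (auto simp: rot_def)
  qed
  also have "\<dots> = measure_pmf.prob (pair_pmf (pair_pmf (Y j) (Y j)) (pair_pmf (Y j) (Y j))) {p. fst p = snd p}"
    unfolding X2[symmetric] by (simp add: map_pair[symmetric] vimage_def case_prod_unfold)
  also have "\<dots> = measure_pmf.prob (pair_pmf (pair_pmf (Y j) (Y j)) (pair_pmf (Y j) (Y j)))
      ({p. fst p = snd p} \<times> {p. fst p = snd p})"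
    by (subst swap4) (auto intro!: arg_cong[where f="measure_pmf.prob _"] simp: vimage_def case_prod_unfold)
  also have "\<dots> = (cb j)\<^sup>2"
    by (subst measure_pmf_prob_product) (auto simp: diag_Y power2_eq_square)
  finally show ?thesis .
qed


definition phi :: "nat \<times> nat set \<Rightarrow> nat set" where
  "phi p = insert (fst p) ((\<lambda>n. n + fst p) ` snd p)"

definition phi' :: "nat set \<Rightarrow> nat \<times> nat set" where
  "phi' A = (Min A, (\<lambda>n. n - Min A) ` (A - {Min A}))"

lemma phi_props:
  assumes "a \<in> {1..M}" "B \<subseteq> {1..M - a}"
  shows "Min (phi (a,B)) = a" "(\<lambda>n. n - a) ` (phi (a,B) - {a}) = B"
    "phi (a,B) \<subseteq> {1..M}" "phi (a,B) \<noteq> {}" "finite (phi (a,B))"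
    "card (phi (a,B)) = card B + 1"
proof -
  have fB: "finite B" using assms(2) finite_subset by blast
  have ge: "x \<in> B \<Longrightarrow> x \<ge> 1" for x using assms(2) by auto
  show "Min (phi (a,B)) = a" unfolding phi_def using fB ge
    by (intro Min_eqI) auto
  have "phi (a,B) - {a} = (\<lambda>n. n + a) ` B" unfolding phi_def using ge by force
  then show "(\<lambda>n. n - a) ` (phi (a,B) - {a}) = B" by (simp add: image_image)
  have "x \<in> B \<Longrightarrow> x + a \<le> M" for x using assms by force
  then show "phi (a,B) \<subseteq> {1..M}" unfolding phi_def using assms by auto
  show "phi (a,B) \<noteq> {}" by (simp add: phi_def)
  show "finite (phi (a,B))" using fB by (simp add: phi_def)
  have "a \<notin> (\<lambda>n. n + a) ` B" using ge by force
  moreover have "card ((\<lambda>n. n + a) ` B) = card B" by (rule card_image) (simp add: inj_on_def)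
  ultimately show "card (phi (a,B)) = card B + 1" using fB by (simp add: phi_def)
qed

lemma phi_bij: "bij_betw phi (SIGMA a:{1..M}. Pow {1..M - a}) (Pow {1..M} - {{}})"
proof (rule bij_betw_byWitness[where f'=phi'])
  show "\<forall>p\<in>(SIGMA a:{1..M}. Pow {1..M - a}). phi' (phi p) = p"
  proof
    fix p assume "p \<in> (SIGMA a:{1..M}. Pow {1..M - a})"
    then obtain a B where pp: "p = (a,B)" "a \<in> {1..M}" "B \<subseteq> {1..M - a}" by auto
    note props = phi_props[OF pp(2,3)]
    show "phi' (phi p) = p" unfolding phi'_def pp props(1) props(2) by simp
  qed
  show "phi ` (SIGMA a:{1..M}. Pow {1..M - a}) \<subseteq> Pow {1..M} - {{}}"
  proof
    fix A assume "A \<in> phi ` (SIGMA a:{1..M}. Pow {1..M - a})"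
    then obtain a B where pp: "A = phi (a,B)" "a \<in> {1..M}" "B \<subseteq> {1..M - a}" by auto
    note props = phi_props[OF pp(2,3)]
    show "A \<in> Pow {1..M} - {{}}" using props(3,4) pp(1) by simp
  qed
  show "\<forall>A\<in>Pow {1..M} - {{}}. phi (phi' A) = A"
  proof
    fix A assume A: "A \<in> Pow {1..M} - {{}}"
    then have fA: "finite A" "A \<noteq> {}" using finite_subset by auto
    let ?a = "Min A"
    have aA: "?a \<in> A" using fA by simp
    have "(\<lambda>n. n + ?a) ` (\<lambda>n. n - ?a) ` (A - {?a}) = A - {?a}"
    proof -
      have "n \<in> A \<Longrightarrow> ?a \<le> n" for n using fA by simp
      then show ?thesis by (force simp: image_image)
    qed
    then show "phi (phi' A) = A" using aA by (auto simp: phi_def phi'_def)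
  qed
  show "phi' ` (Pow {1..M} - {{}}) \<subseteq> (SIGMA a:{1..M}. Pow {1..M - a})"
  proof
    fix p assume "p \<in> phi' ` (Pow {1..M} - {{}})"
    then obtain A where A: "A \<subseteq> {1..M}" "A \<noteq> {}" and p: "p = phi' A" by auto
    have fA: "finite A" using A finite_subset by blast
    have aA: "Min A \<in> A" using fA A by simp
    have "n \<in> A \<Longrightarrow> n \<noteq> Min A \<Longrightarrow> n - Min A \<in> {1..M - Min A}" for n
    proof -
      assume "n \<in> A" "n \<noteq> Min A"
      moreover then have "Min A \<le> n" using fA by simp
      ultimately show ?thesis using A by auto
    qed
    then have "(\<lambda>n. n - Min A) ` (A - {Min A}) \<subseteq> {1..M - Min A}" by blast
    moreover have "Min A \<in> {1..M}" using aA A by auto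
    ultimately show "p \<in> (SIGMA a:{1..M}. Pow {1..M - a})" using p by (simp add: phi'_def)
  qed
qed

lemma D_empty: "D d M {} = 1" by (simp add: D_def)
lemma D_nonneg: "D d M A \<ge> 0" by (simp add: D_def)

lemma decomp:
  assumes d: "d \<in> {1,2}"
  shows "(\<Sum>A\<in>Pow {1..M} - {{}}. G (card A) * D d M A) =
    (\<Sum>a\<in>{1..M}. D d a {a} * (\<Sum>B\<in>Pow {1..M - a}. G (card B + 1) * D d (M - a) B))"
proof -
  have "(\<Sum>A\<in>Pow {1..M} - {{}}. G (card A) * D d M A) =
      (\<Sum>p\<in>(SIGMA a:{1..M}. Pow {1..M - a}). G (card (phi p)) * D d M (phi p))"
    by (rule sum.reindex_bij_betw[OF phi_bij, symmetric])
  also have "\<dots> = (\<Sum>p\<in>(SIGMA a:{1..M}. Pow {1..M - a}). D d (fst p) {fst p} * (G (card (snd p) + 1) * D d (M - fst p) (snd p)))"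
  proof (intro sum.cong refl)
    fix p assume p: "p \<in> (SIGMA a:{1..M}. Pow {1..M - a})"
    then obtain a B where pp: "p = (a,B)" "a \<in> {1..M}" "B \<subseteq> {1..M - a}" by auto
    note props = phi_props[OF pp(2,3)]
    have "D d M (phi (a,B)) = D d a {a} * D d (M - a) B"
      using D_markov[OF d props(5) props(4) props(3) props(1)[symmetric]] props(1,2) by simp
    then show "G (card (phi p)) * D d M (phi p) = D d (fst p) {fst p} * (G (card (snd p) + 1) * D d (M - fst p) (snd p))"
      using pp props by simp
  qed
  also have "\<dots> = (\<Sum>a\<in>{1..M}. \<Sum>B\<in>Pow {1..M - a}. D d a {a} * (G (card B + 1) * D d (M - a) B))"
    by (subst sum.Sigma) (auto simp: case_prod_unfold)
  also have "\<dots> = (\<Sum>a\<in>{1..M}. D d a {a} * (\<Sum>B\<in>Pow {1..M - a}. G (card B + 1) * D d (M - a) B))"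
    by (simp add: sum_distrib_left)
  finally show ?thesis .
qed

definition Psi :: "nat \<Rightarrow> real \<Rightarrow> nat \<Rightarrow> real" where
  "Psi d l M = (\<Sum>A\<in>Pow {1..M}. l ^ card A * D d M A)"

lemma sum_Pow_split:
  fixes M :: nat shows "(\<Sum>A\<in>Pow {1..M}. f A) = f {} + (\<Sum>A\<in>Pow {1..M} - {{}}. f A)"
  by (rule sum.remove) simp_all

lemma Psi_rec:
  assumes d: "d \<in> {1,2}"
  shows "Psi d l M = 1 + (\<Sum>a\<in>{1..M}. l * D d a {a} * Psi d l (M - a))"
proof -
  have "Psi d l M = 1 + (\<Sum>A\<in>Pow {1..M} - {{}}. l ^ card A * D d M A)"
    unfolding Psi_def by (subst sum_Pow_split) (simp add: D_empty)
  also have "(\<Sum>A\<in>Pow {1..M} - {{}}. l ^ card A * D d M A) =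
     (\<Sum>a\<in>{1..M}. D d a {a} * (\<Sum>B\<in>Pow {1..M - a}. l ^ (card B + 1) * D d (M - a) B))"
    by (rule decomp[OF d])
  also have "\<dots> = (\<Sum>a\<in>{1..M}. l * D d a {a} * Psi d l (M - a))"
    unfolding Psi_def by (simp add: sum_distrib_left mult_ac)
  finally show ?thesis .
qed

lemma T_eq:
  assumes d: "d \<in> {1,2}"
  shows "(\<Sum>A\<in>{A\<in>Pow {1..N}. 2 \<le> card A}. l ^ card A * D d N A) =
     (\<Sum>a\<in>{1..N}. l * D d a {a} * (Psi d l (N - a) - 1))"
proof -
  have "(\<Sum>A\<in>{A\<in>Pow {1..N}. 2 \<le> card A}. l ^ card A * D d N A) =
        (\<Sum>A\<in>Pow {1..N} - {{}}. (if 2 \<le> card A then l ^ card A else 0) * D d N A)"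
    by (rule sum.mono_neutral_cong_left) auto
  also have "\<dots> = (\<Sum>a\<in>{1..N}. D d a {a} * (\<Sum>B\<in>Pow {1..N - a}. (if 2 \<le> card B + 1 then l ^ (card B + 1) else 0) * D d (N - a) B))"
    by (rule decomp[OF d])
  also have "\<dots> = (\<Sum>a\<in>{1..N}. l * D d a {a} * (Psi d l (N - a) - 1))"
  proof (intro sum.cong refl)
    fix a
    have "(\<Sum>B\<in>Pow {1..N - a}. (if 2 \<le> card B + 1 then l ^ (card B + 1) else 0) * D d (N - a) B)
       = (\<Sum>B\<in>Pow {1..N - a} - {{}}. l * (l ^ card B * D d (N - a) B))"
    proof -
      have "(\<Sum>B\<in>Pow {1..N - a} - {{}}. (if 2 \<le> card B + 1 then l ^ (card B + 1) else 0) * D d (N - a) B)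
          = (\<Sum>B\<in>Pow {1..N - a} - {{}}. l * (l ^ card B * D d (N - a) B))"
      proof (intro sum.cong refl)
        fix B assume B: "B \<in> Pow {1..N - a} - {{}}"
        then have "finite B" using finite_subset by auto
        then have "card B > 0" using B by (auto simp: card_gt_0_iff)
        then show "(if 2 \<le> card B + 1 then l ^ (card B + 1) else 0) * D d (N - a) B = l * (l ^ card B * D d (N - a) B)"
          by simp
      qed
      then show ?thesis by (subst sum_Pow_split) simp
    qed
    also have "\<dots> = l * (Psi d l (N - a) - 1)"
      unfolding Psi_def sum_Pow_split[of _ "N - a"] by (simp add: D_empty sum_distrib_left)
    finally show "D d a {a} * (\<Sum>B\<in>Pow {1..N - a}. (if 2 \<le> card B + 1 then l ^ (card B + 1) else 0) * D d (N - a) B)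
       = l * D d a {a} * (Psi d l (N - a) - 1)" by simp
  qed
  finally show ?thesis .
qed

lemma Psi_bound:
  assumes d: "d \<in> {1,2}" and l: "l \<ge> 0" and x: "l * (\<Sum>a\<in>{1..N}. D d a {a}) < 1"
  shows "M \<le> N \<Longrightarrow> Psi d l M \<le> 1 / (1 - l * (\<Sum>a\<in>{1..N}. D d a {a}))"
proof (induction M rule: less_induct)
  case (less M)
  define x where "x = l * (\<Sum>a\<in>{1..N}. D d a {a})"
  have x1: "x < 1" using x by (simp add: x_def)
  have "Psi d l M = 1 + (\<Sum>a\<in>{1..M}. l * D d a {a} * Psi d l (M - a))" by (rule Psi_rec[OF d])
  also have "\<dots> \<le> 1 + (\<Sum>a\<in>{1..M}. l * D d a {a} * (1 / (1 - x)))"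
  proof (intro add_left_mono sum_mono mult_left_mono)
    fix a assume a: "a \<in> {1..M}"
    show "Psi d l (M - a) \<le> 1 / (1 - x)" using less a unfolding x_def by auto
    show "0 \<le> l * D d a {a}" using l D_nonneg by simp
  qed
  also have "\<dots> = 1 + l * (\<Sum>a\<in>{1..M}. D d a {a}) / (1 - x)"
    by (simp add: sum_distrib_left sum_divide_distrib mult_ac)
  also have "\<dots> \<le> 1 + x / (1 - x)"
  proof -
    have "(\<Sum>a\<in>{1..M}. D d a {a}) \<le> (\<Sum>a\<in>{1..N}. D d a {a})"
      using less.prems by (intro sum_mono2) (auto simp: D_nonneg)
    then have "l * (\<Sum>a\<in>{1..M}. D d a {a}) \<le> x" unfolding x_def using l by (rule mult_left_mono)
    then show ?thesis using x1 by (simp add: divide_right_mono)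
  qed
  also have "\<dots> = 1 / (1 - x)" using x1 by (simp add: field_simps)
  finally show ?case by (simp add: x_def)
qed

lemma T_bound:
  assumes d: "d \<in> {1,2}" and l: "l \<ge> 0" and x: "l * (\<Sum>a\<in>{1..N}. D d a {a}) < 1"
  shows "(\<Sum>A\<in>{A\<in>Pow {1..N}. 2 \<le> card A}. l ^ card A * D d N A) \<le>
     (l * (\<Sum>a\<in>{1..N}. D d a {a}))\<^sup>2 / (1 - l * (\<Sum>a\<in>{1..N}. D d a {a}))"
proof -
  define x where "x = l * (\<Sum>a\<in>{1..N}. D d a {a})"
  have x1: "x < 1" using x by (simp add: x_def)
  have "(\<Sum>A\<in>{A\<in>Pow {1..N}. 2 \<le> card A}. l ^ card A * D d N A) =
     (\<Sum>a\<in>{1..N}. l * D d a {a} * (Psi d l (N - a) - 1))" by (rule T_eq[OF d])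
  also have "\<dots> \<le> (\<Sum>a\<in>{1..N}. l * D d a {a} * (x / (1 - x)))"
  proof (intro sum_mono mult_left_mono)
    fix a assume a: "a \<in> {1..N}"
    have "Psi d l (N - a) \<le> 1 / (1 - x)" using Psi_bound[OF d l x] unfolding x_def by simp
    then show "Psi d l (N - a) - 1 \<le> x / (1 - x)" using x1 by (simp add: field_simps)
    show "0 \<le> l * D d a {a}" using l D_nonneg by simp
  qed
  also have "\<dots> = (\<Sum>a\<in>{1..N}. l * D d a {a}) * (x / (1 - x))" by (rule sum_distrib_right[symmetric])
  also have "\<dots> = x * (x / (1 - x))" unfolding x_def by (simp add: sum_distrib_left)
  also have "\<dots> = x\<^sup>2 / (1 - x)" by (simp add: power2_eq_square)
  finally show ?thesis by (simp add: x_def)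
qed


definition chi :: "(nat \<Rightarrow> int list \<Rightarrow> 'w \<Rightarrow> real) \<Rightarrow> (nat \<times> int list) set \<Rightarrow> 'w \<Rightarrow> real" where
  "chi h S \<omega> = (\<Prod>i\<in>S. (\<lambda>(n, x). h n x) i \<omega>)"

locale env = prob_space Q for Q :: "'w measure" +
  fixes h :: "nat \<Rightarrow> int list \<Rightarrow> 'w \<Rightarrow> real" and d :: nat
  assumes h_meas: "\<And>n x. h n x \<in> borel_measurable Q"
    and h_indep: "indep_vars (\<lambda>_. borel) (\<lambda>(n, x). h n x) {(n, x). length x = d}"
    and h_plus: "\<And>n x. length x = d \<Longrightarrow> measure Q {\<omega> \<in> space Q. h n x \<omega> = 1} = 1/2"
    and h_minus: "\<And>n x. length x = d \<Longrightarrow> measure Q {\<omega> \<in> space Q. h n x \<omega> = -1} = 1/2"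
begin

abbreviation "I \<equiv> {(n, x::int list). length x = d}"

lemma hm[measurable]: "h n x \<in> borel_measurable Q" by (rule h_meas)

lemma chi_meas[measurable]: "chi h S \<in> borel_measurable Q"
  unfolding chi_def by (simp add: case_prod_unfold)

lemma h_pm: assumes "length x = d"
  shows "AE \<omega> in Q. \<omega> \<in> space Q \<and> (h n x \<omega> = 1 \<or> h n x \<omega> = -1)"
proof -
  let ?A = "{\<omega> \<in> space Q. h n x \<omega> = 1}" and ?B = "{\<omega> \<in> space Q. h n x \<omega> = -1}"
  have sA: "?A \<in> sets Q" and sB: "?B \<in> sets Q" by measurable
  have "prob (?A \<union> ?B) = prob ?A + prob ?B"
    by (rule finite_measure_Union[OF sA sB]) auto
  then have "prob (?A \<union> ?B) = 1" using h_plus[OF assms] h_minus[OF assms] by simp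
  then have "AE \<omega> in Q. \<omega> \<in> ?A \<union> ?B" by (rule AE_prob_1)
  then show ?thesis by eventually_elim auto
qed

lemma h_ae: assumes "length x = d"
  shows "AE \<omega> in Q. h n x \<omega> = indicator {\<omega> \<in> space Q. h n x \<omega> = 1} \<omega> - indicator {\<omega> \<in> space Q. h n x \<omega> = -1} \<omega>"
  using h_pm[OF assms, of n] by eventually_elim (auto simp: indicator_def)

lemma h_int: assumes "length x = d" shows "integrable Q (h n x)" "integral\<^sup>L Q (h n x) = 0"
proof -
  let ?A = "{\<omega> \<in> space Q. h n x \<omega> = 1}" and ?B = "{\<omega> \<in> space Q. h n x \<omega> = -1}"
  have sA: "?A \<in> sets Q" and sB: "?B \<in> sets Q" by measurable
  have iA: "integrable Q (indicator ?A :: 'w \<Rightarrow> real)"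
    using sA by (rule integrable_real_indicator) (simp add: emeasure_eq_measure)
  have iB: "integrable Q (indicator ?B :: 'w \<Rightarrow> real)"
    using sB by (rule integrable_real_indicator) (simp add: emeasure_eq_measure)
  have i: "integrable Q (\<lambda>\<omega>. indicator ?A \<omega> - indicator ?B \<omega> :: real)"
    using iA iB by (rule Bochner_Integration.integrable_diff)
  show "integrable Q (h n x)"
  proof (rule integrable_cong_AE_imp[OF i])
    show "AE \<omega> in Q. indicator ?A \<omega> - indicator ?B \<omega> = h n x \<omega>"
      using h_pm[OF assms, of n] by eventually_elim (auto simp: indicator_def)
  qed simp
  have "integral\<^sup>L Q (h n x) = integral\<^sup>L Q (\<lambda>\<omega>. indicator ?A \<omega> - indicator ?B \<omega> :: real)"
  proof (rule integral_cong_AE)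
    show "AE \<omega> in Q. h n x \<omega> = indicator ?A \<omega> - indicator ?B \<omega>"
      using h_ae[OF assms, of n] .
  qed simp_all
  also have "\<dots> = integral\<^sup>L Q (indicator ?A :: 'w \<Rightarrow> real) - integral\<^sup>L Q (indicator ?B :: 'w \<Rightarrow> real)"
    using iA iB by (rule Bochner_Integration.integral_diff)
  also have "\<dots> = prob ?A - prob ?B"
    using sA sB by (simp add: emeasure_eq_measure)
  finally show "integral\<^sup>L Q (h n x) = 0" using h_plus[OF assms] h_minus[OF assms] by simp
qed

lemma chi_int:
  assumes S: "finite S" "S \<subseteq> I"
  shows "integrable Q (chi h S)" "integral\<^sup>L Q (chi h S) = (if S = {} then 1 else 0)"
proof -
  have ind: "indep_vars (\<lambda>_. borel) (\<lambda>(n, x). h n x) S" using h_indep S(2) by (rule indep_vars_subset)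
  have int: "\<And>i. i \<in> S \<Longrightarrow> integrable Q ((\<lambda>(n, x). h n x) i)" using S(2) h_int by auto
  show "integrable Q (chi h S)" unfolding chi_def
    by (rule indep_vars_integrable[OF S(1) ind int])
  have "integral\<^sup>L Q (chi h S) = (\<Prod>i\<in>S. integral\<^sup>L Q ((\<lambda>(n, x). h n x) i))"
    unfolding chi_def by (rule indep_vars_lebesgue_integral[OF S(1) ind int])
  also have "\<dots> = (\<Prod>i\<in>S. 0)"
    using S(2) h_int by (intro prod.cong refl) auto
  finally show "integral\<^sup>L Q (chi h S) = (if S = {} then 1 else 0)" using S(1) by (simp add: card_gt_0_iff)
qed

lemma chi_mult_ae:
  assumes S: "finite S" "S \<subseteq> I" and T: "finite T" "T \<subseteq> I"
  shows "AE \<omega> in Q. chi h S \<omega> * chi h T \<omega> = chi h ((S - T) \<union> (T - S)) \<omega>"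
proof -
  have "AE \<omega> in Q. \<forall>i\<in>S \<inter> T. ((\<lambda>(n, x). h n x) i \<omega>)\<^sup>2 = 1"
  proof (rule AE_finite_allI)
    show "finite (S \<inter> T)" using S by simp
    fix i assume i: "i \<in> S \<inter> T"
    then obtain n x where ii: "i = (n,x)" "length x = d" using S by auto
    show "AE \<omega> in Q. ((\<lambda>(n, x). h n x) i \<omega>)\<^sup>2 = 1"
      using h_pm[OF ii(2), of n] by eventually_elim (auto simp: ii)
  qed
  then show ?thesis
  proof eventually_elim
    case (elim \<omega>)
    let ?f = "\<lambda>i. (\<lambda>(n, x). h n x) i \<omega>"
    have "prod ?f (S \<inter> T) * prod ?f (S \<inter> T) = (\<Prod>i\<in>S \<inter> T. (?f i)\<^sup>2)"
      by (simp add: prod.distrib[symmetric] power2_eq_square)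
    also have "\<dots> = 1" using elim by simp
    finally have one: "prod ?f (S \<inter> T) * prod ?f (S \<inter> T) = 1" .
    have eS: "S = (S - T) \<union> (S \<inter> T)" and eT: "T = (T - S) \<union> (S \<inter> T)" by auto
    have pS: "prod ?f S = prod ?f (S - T) * prod ?f (S \<inter> T)"
      by (subst eS, rule prod.union_disjoint) (use S T in auto)
    have pT: "prod ?f T = prod ?f (T - S) * prod ?f (S \<inter> T)"
      by (subst eT, rule prod.union_disjoint) (use S T in auto)
    have pU: "prod ?f ((S - T) \<union> (T - S)) = prod ?f (S - T) * prod ?f (T - S)"
      by (rule prod.union_disjoint) (use S T in auto)
    have "prod ?f S * prod ?f T = prod ?f (S - T) * prod ?f (T - S) * (prod ?f (S \<inter> T) * prod ?f (S \<inter> T))"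
      unfolding pS pT by (simp add: mult_ac)
    then show ?case unfolding chi_def using one pU by simp
  qed
qed

lemma chi_mult_int:
  assumes S: "finite S" "S \<subseteq> I" and T: "finite T" "T \<subseteq> I"
  shows "integrable Q (\<lambda>\<omega>. chi h S \<omega> * chi h T \<omega>)"
    "integral\<^sup>L Q (\<lambda>\<omega>. chi h S \<omega> * chi h T \<omega>) = (if S = T then 1 else 0)"
proof -
  have U: "finite ((S - T) \<union> (T - S))" "(S - T) \<union> (T - S) \<subseteq> I" using S T by auto
  show "integrable Q (\<lambda>\<omega>. chi h S \<omega> * chi h T \<omega>)"
  proof (rule integrable_cong_AE_imp[OF chi_int(1)[OF U]])
    show "AE \<omega> in Q. chi h ((S - T) \<union> (T - S)) \<omega> = chi h S \<omega> * chi h T \<omega>"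
      using chi_mult_ae[OF S T] by eventually_elim simp
  qed simp
  have "integral\<^sup>L Q (\<lambda>\<omega>. chi h S \<omega> * chi h T \<omega>) = integral\<^sup>L Q (chi h ((S - T) \<union> (T - S)))"
    by (rule integral_cong_AE) (use chi_mult_ae[OF S T] in auto)
  also have "\<dots> = (if S = T then 1 else 0)" using chi_int(2)[OF U] by auto
  finally show "integral\<^sup>L Q (\<lambda>\<omega>. chi h S \<omega> * chi h T \<omega>) = (if S = T then 1 else 0)" .
qed

lemma second_moment:
  assumes K: "finite K" and sig: "\<And>k. k \<in> K \<Longrightarrow> finite (\<sigma> k) \<and> \<sigma> k \<subseteq> I"
  shows "integrable Q (\<lambda>\<omega>. (\<Sum>k\<in>K. \<beta> k * chi h (\<sigma> k) \<omega>)\<^sup>2)"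
    "integral\<^sup>L Q (\<lambda>\<omega>. (\<Sum>k\<in>K. \<beta> k * chi h (\<sigma> k) \<omega>)\<^sup>2) =
      (\<Sum>k\<in>K. \<Sum>k'\<in>K. \<beta> k * \<beta> k' * (if \<sigma> k = \<sigma> k' then 1 else 0))"
proof -
  have sq: "(\<Sum>k\<in>K. \<beta> k * chi h (\<sigma> k) \<omega>)\<^sup>2 =
     (\<Sum>k\<in>K. \<Sum>k'\<in>K. \<beta> k * \<beta> k' * (chi h (\<sigma> k) \<omega> * chi h (\<sigma> k') \<omega>))" for \<omega>
    by (simp add: power2_eq_square sum_product mult_ac)
  have ii: "k \<in> K \<Longrightarrow> k' \<in> K \<Longrightarrow> integrable Q (\<lambda>\<omega>. \<beta> k * \<beta> k' * (chi h (\<sigma> k) \<omega> * chi h (\<sigma> k') \<omega>))" for k k'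
    using chi_mult_int(1)[of "\<sigma> k" "\<sigma> k'"] sig by auto
  show "integrable Q (\<lambda>\<omega>. (\<Sum>k\<in>K. \<beta> k * chi h (\<sigma> k) \<omega>)\<^sup>2)"
    unfolding sq using ii by (intro Bochner_Integration.integrable_sum) auto
  have "integral\<^sup>L Q (\<lambda>\<omega>. (\<Sum>k\<in>K. \<beta> k * chi h (\<sigma> k) \<omega>)\<^sup>2) =
     (\<Sum>k\<in>K. \<Sum>k'\<in>K. integral\<^sup>L Q (\<lambda>\<omega>. \<beta> k * \<beta> k' * (chi h (\<sigma> k) \<omega> * chi h (\<sigma> k') \<omega>)))"
  proof -
    have ik: "k \<in> K \<Longrightarrow> integrable Q (\<lambda>\<omega>. \<Sum>k'\<in>K. \<beta> k * \<beta> k' * (chi h (\<sigma> k) \<omega> * chi h (\<sigma> k') \<omega>))" for k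
      using ii by (intro Bochner_Integration.integrable_sum) auto
    have "integral\<^sup>L Q (\<lambda>\<omega>. (\<Sum>k\<in>K. \<beta> k * chi h (\<sigma> k) \<omega>)\<^sup>2) =
      (\<Sum>k\<in>K. integral\<^sup>L Q (\<lambda>\<omega>. \<Sum>k'\<in>K. \<beta> k * \<beta> k' * (chi h (\<sigma> k) \<omega> * chi h (\<sigma> k') \<omega>)))"
      unfolding sq by (rule Bochner_Integration.integral_sum) (rule ik)
    also have "\<dots> = (\<Sum>k\<in>K. \<Sum>k'\<in>K. integral\<^sup>L Q (\<lambda>\<omega>. \<beta> k * \<beta> k' * (chi h (\<sigma> k) \<omega> * chi h (\<sigma> k') \<omega>)))"
    proof (rule sum.cong[OF refl])
      fix k assume "k \<in> K"
      show "integral\<^sup>L Q (\<lambda>\<omega>. \<Sum>k'\<in>K. \<beta> k * \<beta> k' * (chi h (\<sigma> k) \<omega> * chi h (\<sigma> k') \<omega>)) =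
        (\<Sum>k'\<in>K. integral\<^sup>L Q (\<lambda>\<omega>. \<beta> k * \<beta> k' * (chi h (\<sigma> k) \<omega> * chi h (\<sigma> k') \<omega>)))"
        by (rule Bochner_Integration.integral_sum) (rule ii[OF \<open>k \<in> K\<close>])
    qed
    finally show ?thesis .
  qed
  also have "\<dots> = (\<Sum>k\<in>K. \<Sum>k'\<in>K. \<beta> k * \<beta> k' * (if \<sigma> k = \<sigma> k' then 1 else 0))"
  proof (intro sum.cong refl)
    fix k k' assume "k \<in> K" "k' \<in> K"
    then show "integral\<^sup>L Q (\<lambda>\<omega>. \<beta> k * \<beta> k' * (chi h (\<sigma> k) \<omega> * chi h (\<sigma> k') \<omega>)) =
        \<beta> k * \<beta> k' * (if \<sigma> k = \<sigma> k' then 1 else 0)"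
      using chi_mult_int(2)[of "\<sigma> k" "\<sigma> k'"] sig by simp
  qed
  finally show "integral\<^sup>L Q (\<lambda>\<omega>. (\<Sum>k\<in>K. \<beta> k * chi h (\<sigma> k) \<omega>)\<^sup>2) =
      (\<Sum>k\<in>K. \<Sum>k'\<in>K. \<beta> k * \<beta> k' * (if \<sigma> k = \<sigma> k' then 1 else 0))" .
qed

end


definition sig :: "nat set \<times> int list list \<Rightarrow> (nat \<times> int list) set" where
  "sig p = (\<lambda>n. (n, snd p ! n)) ` fst p"

definition AA :: "nat \<Rightarrow> nat set set" where "AA N = {A \<in> Pow {1..N}. 2 \<le> card A}"

lemma finite_AA[simp]: "finite (AA N)" by (simp add: AA_def)

lemma Pow_split3:
  fixes F :: "nat set \<Rightarrow> real"
  shows "(\<Sum>A\<in>Pow {1..N}. F A) = F {} + (\<Sum>k\<in>{1..N}. F {k}) + (\<Sum>A\<in>AA N. F A)"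
proof -
  let ?P0 = "{A \<in> Pow {1..N}. card A = 0}" and ?P1 = "{A \<in> Pow {1..N}. card A = 1}"
  have e: "Pow {1..N} = (?P0 \<union> ?P1) \<union> AA N" by (auto simp: AA_def)
  have "(\<Sum>A\<in>(?P0 \<union> ?P1) \<union> AA N. F A) = (\<Sum>A\<in>?P0 \<union> ?P1. F A) + (\<Sum>A\<in>AA N. F A)"
    by (rule sum.union_disjoint) (auto simp: AA_def)
  then have "(\<Sum>A\<in>Pow {1..N}. F A) = (\<Sum>A\<in>?P0 \<union> ?P1. F A) + (\<Sum>A\<in>AA N. F A)"
    by (simp only: e[symmetric])
  also have "(\<Sum>A\<in>?P0 \<union> ?P1. F A) = (\<Sum>A\<in>?P0. F A) + (\<Sum>A\<in>?P1. F A)"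
    by (rule sum.union_disjoint) auto
  also have "?P0 = {{}}"
  proof -
    have "A \<subseteq> {1..N} \<Longrightarrow> card A = 0 \<Longrightarrow> A = {}" for A
      using finite_subset[of A "{1..N}"] by auto
    then show ?thesis by auto
  qed
  also have "?P1 = (\<lambda>k. {k}) ` {1..N}" by (auto simp: card_1_singleton_iff)
  also have "(\<Sum>A\<in>(\<lambda>k. {k}) ` {1..N}. F A) = (\<Sum>k\<in>{1..N}. F {k})"
    by (subst sum.reindex) (auto simp: inj_on_def)
  finally show ?thesis by simp
qed

lemma prod_sig:
  assumes "finite A"
  shows "(\<Prod>n\<in>A. h n (w ! n) \<omega>) = chi h (sig (A, w)) \<omega>"
  unfolding chi_def sig_def by (subst prod.reindex) (auto simp: inj_on_def)

lemma card_walks_pos: "d \<in> {1,2} \<Longrightarrow> card (walks d N) > 0"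
  using finite_walks[of d N] by (auto simp: card_gt_0_iff)

lemma Zpart_expand:
  assumes d: "d \<in> {1,2}"
  shows "Zpart d c h N \<omega> = (\<Sum>A\<in>Pow {1..N}. c N ^ card A * (\<Sum>w\<in>walks d N. chi h (sig (A, w)) \<omega>) / card (walks d N))"
proof -
  have fw: "finite (walks d N)" "walks d N \<noteq> {}" using finite_walks[OF d] by auto
  have "Zpart d c h N \<omega> = (\<Sum>w\<in>walks d N. \<Prod>n\<in>{1..N}. (1 + c N * h n (w ! n) \<omega>)) / card (walks d N)"
    unfolding Zpart_def P0_def by (rule integral_pmf_of_set[OF fw(2,1)])
  also have "\<dots> = (\<Sum>w\<in>walks d N. \<Sum>A\<in>Pow {1..N}. c N ^ card A * chi h (sig (A, w)) \<omega>) / card (walks d N)"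
  proof -
    have "(\<Prod>n\<in>{1..N}. (1 + c N * h n (w ! n) \<omega>)) = (\<Sum>A\<in>Pow {1..N}. c N ^ card A * chi h (sig (A, w)) \<omega>)" for w
    proof -
      have "(\<Prod>n\<in>{1..N}. (c N * h n (w ! n) \<omega> + 1)) =
        (\<Sum>A\<in>Pow {1..N}. (\<Prod>n\<in>A. c N * h n (w ! n) \<omega>) * (\<Prod>n\<in>{1..N} - A. 1))"
        by (rule prod_add) simp
      also have "\<dots> = (\<Sum>A\<in>Pow {1..N}. c N ^ card A * chi h (sig (A, w)) \<omega>)"
      proof (intro sum.cong refl)
        fix A assume "A \<in> Pow {1..N}"
        then have "finite A" using finite_subset by auto
        then show "(\<Prod>n\<in>A. c N * h n (w ! n) \<omega>) * (\<Prod>n\<in>{1..N} - A. 1) = c N ^ card A * chi h (sig (A, w)) \<omega>"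
          by (simp add: prod.distrib prod_sig)
      qed
      finally show ?thesis by (simp add: add.commute)
    qed
    then show ?thesis by simp
  qed
  also have "\<dots> = (\<Sum>A\<in>Pow {1..N}. c N ^ card A * (\<Sum>w\<in>walks d N. chi h (sig (A, w)) \<omega>) / card (walks d N))"
    by (subst sum.swap) (simp add: sum_divide_distrib sum_distrib_left)
  finally show ?thesis .
qed

lemma fk_eq:
  assumes d: "d \<in> {1,2}" and k: "k \<le> N"
  shows "fk d c h N k \<omega> = c N * (\<Sum>w\<in>walks d N. h k (w ! k) \<omega>) / card (walks d N)"
proof -
  have fw: "finite (walks d N)" "walks d N \<noteq> {}" using finite_walks[OF d] by auto
  have fk': "finite (walks d k)" "walks d k \<noteq> {}" using finite_walks[OF d] by auto
  define V where "V = (\<lambda>w. w ! k) ` walks d k"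
  have fV: "finite V" using fk' by (simp add: V_def)
  let ?M = "map_pmf (\<lambda>w. w ! k) (W d k)"
  have "set_pmf (W d k) = walks d k" using P0_W[OF d, of k] fk' unfolding P0_def by (metis set_pmf_of_set)
  then have sM: "set_pmf ?M = V" by (simp add: V_def)
  have sW: "set_pmf (W d k) = walks d k" by fact
  have p0M: "p0 d k x = pmf ?M x" for x
    unfolding p0_def P0_W[OF d] by (simp add: pmf_map vimage_def)
  have "(\<Sum>w\<in>walks d N. h k (w ! k) \<omega>) / card (walks d N) = integral\<^sup>L (P0 d N) (\<lambda>w. h k (w ! k) \<omega>)"
    unfolding P0_def by (rule integral_pmf_of_set[OF fw(2,1), symmetric])
  also have "\<dots> = integral\<^sup>L ?M (\<lambda>x. h k x \<omega>)"
    unfolding P0_W[OF d] map_nth_prefix[OF d k, symmetric] by simp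
  also have "\<dots> = (\<Sum>x\<in>V. pmf ?M x * h k x \<omega>)"
    by (subst integral_measure_pmf[OF fV]) (auto simp: sW V_def)
  also have "\<dots> = infsum (\<lambda>x. h k x \<omega> * p0 d k x) {x::int list. length x = d}"
  proof -
    have "infsum (\<lambda>x. h k x \<omega> * p0 d k x) {x::int list. length x = d} = infsum (\<lambda>x. h k x \<omega> * p0 d k x) V"
    proof (rule infsum_cong_neutral)
      fix x assume "x \<in> {x::int list. length x = d} - V"
      then show "h k x \<omega> * p0 d k x = 0" unfolding p0M using sM by (simp add: pmf_eq_0_set_pmf)
    next
      fix x assume "x \<in> V - {x::int list. length x = d}"
      moreover have "w \<in> walks d k \<Longrightarrow> length (w ! k) = d" for w
        using walks_len[of w d k] nth_mem[of k w] by (auto simp: walks_def)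
      ultimately show "h k x \<omega> * p0 d k x = 0" unfolding V_def by auto
    qed simp
    also have "\<dots> = (\<Sum>x\<in>V. pmf ?M x * h k x \<omega>)" using fV by (simp add: p0M mult.commute)
    finally show ?thesis by simp
  qed
  finally show ?thesis unfolding fk_def by (simp add: times_divide_eq_right[symmetric])
qed

definition beta :: "(nat \<Rightarrow> real) \<Rightarrow> nat \<Rightarrow> nat \<Rightarrow> nat set \<times> int list list \<Rightarrow> real" where
  "beta c d N p = c N ^ card (fst p) / card (walks d N)"

lemma RN_expand:
  assumes d: "d \<in> {1,2}"
  shows "RN d c h N \<omega> = (\<Sum>p\<in>AA N \<times> walks d N. beta c d N p * chi h (sig p) \<omega>)"
proof -
  let ?n = "real (card (walks d N))"
  have n0: "?n > 0" using card_walks_pos[OF d] by simp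
  define F where "F A = c N ^ card A * (\<Sum>w\<in>walks d N. chi h (sig (A, w)) \<omega>) / ?n" for A
  have Z: "Zpart d c h N \<omega> = F {} + (\<Sum>k\<in>{1..N}. F {k}) + (\<Sum>A\<in>AA N. F A)"
    unfolding Zpart_expand[OF d] F_def[symmetric] by (rule Pow_split3)
  have F0: "F {} = 1" using n0 by (simp add: F_def sig_def chi_def)
  have F1: "F {k} = fk d c h N k \<omega>" if "k \<in> {1..N}" for k
    using that by (simp add: F_def fk_eq[OF d] sig_def chi_def)
  have F2: "(\<Sum>A\<in>AA N. F A) = (\<Sum>p\<in>AA N \<times> walks d N. beta c d N p * chi h (sig p) \<omega>)"
  proof -
    have "(\<Sum>p\<in>AA N \<times> walks d N. beta c d N p * chi h (sig p) \<omega>) =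
      (\<Sum>A\<in>AA N. \<Sum>w\<in>walks d N. beta c d N (A,w) * chi h (sig (A,w)) \<omega>)"
      by (simp add: sum.cartesian_product)
    then show ?thesis unfolding F_def beta_def
      by (simp add: sum_distrib_left sum_divide_distrib)
  qed
  show ?thesis unfolding RN_def Z F0 F2 using F1 by simp
qed

lemma pair_pmf_of_set:
  assumes "finite S" "S \<noteq> {}"
  shows "pair_pmf (pmf_of_set S) (pmf_of_set S) = pmf_of_set (S \<times> S)"
proof (rule pmf_eqI)
  fix p :: "'a \<times> 'a"
  show "pmf (pair_pmf (pmf_of_set S) (pmf_of_set S)) p = pmf (pmf_of_set (S \<times> S)) p"
    using assms by (cases p) (simp add: pmf_pair indicator_def card_cartesian_product)
qed

lemma D_count:
  assumes d: "d \<in> {1,2}"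
  shows "D d N A = card {p \<in> walks d N \<times> walks d N. \<forall>n\<in>A. fst p ! n = snd p ! n} / (card (walks d N))\<^sup>2"
proof -
  have fw: "finite (walks d N)" "walks d N \<noteq> {}" using finite_walks[OF d] by auto
  have "D d N A = measure_pmf.prob (pmf_of_set (walks d N \<times> walks d N)) {p. \<forall>n\<in>A. fst p ! n = snd p ! n}"
    unfolding D_def P0_W[OF d, symmetric] P0_def pair_pmf_of_set[OF fw] ..
  also have "\<dots> = card (walks d N \<times> walks d N \<inter> {p. \<forall>n\<in>A. fst p ! n = snd p ! n}) / card (walks d N \<times> walks d N)"
    using fw by (subst measure_pmf_of_set) auto
  also have "walks d N \<times> walks d N \<inter> {p. \<forall>n\<in>A. fst p ! n = snd p ! n} = {p \<in> walks d N \<times> walks d N. \<forall>n\<in>A. fst p ! n = snd p ! n}"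
    by auto
  finally show ?thesis by (simp add: card_cartesian_product power2_eq_square)
qed

lemma sig_eq: "sig (A, w) = sig (B, w') \<longleftrightarrow> A = B \<and> (\<forall>n\<in>A. w ! n = w' ! n)"
proof
  assume H: "sig (A, w) = sig (B, w')"
  have "fst ` sig (A, w) = A" "fst ` sig (B, w') = B" by (auto simp: sig_def image_image)
  then have AB: "A = B" using H by metis
  have "w ! n = w' ! n" if n: "n \<in> A" for n
  proof -
    have "(n, w ! n) \<in> sig (B, w')" using H n by (auto simp: sig_def)
    then show ?thesis by (auto simp: sig_def)
  qed
  then show "A = B \<and> (\<forall>n\<in>A. w ! n = w' ! n)" using AB by blast
qed (auto simp: sig_def)

lemma sum_K: "(\<Sum>p\<in>A \<times> B. f p) = (\<Sum>a\<in>A. \<Sum>b\<in>B. f (a, b))"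
  by (simp add: sum.cartesian_product)

context env
begin

lemma sig_I: assumes "p \<in> AA N \<times> walks d N" shows "finite (sig p) \<and> sig p \<subseteq> I"
proof -
  obtain A w where p: "p = (A, w)" "A \<subseteq> {1..N}" "w \<in> walks d N" using assms by (auto simp: AA_def)
  have "n \<in> A \<Longrightarrow> length (w ! n) = d" for n
    using p walks_len[of w d N] nth_mem[of n w] by (auto simp: walks_def)
  moreover have "finite A" using p(2) finite_subset by auto
  ultimately show ?thesis using p by (auto simp: sig_def)
qed

lemma RN_moment:
  assumes d: "d \<in> {1,2}"
  shows "integrable Q (\<lambda>\<omega>. (RN d c h N \<omega>)\<^sup>2)"
    "integral\<^sup>L Q (\<lambda>\<omega>. (RN d c h N \<omega>)\<^sup>2) = (\<Sum>A\<in>AA N. (c N ^ 2) ^ card A * D d N A)"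
    "RN d c h N \<in> borel_measurable Q"
proof -
  let ?K = "AA N \<times> walks d N" and ?W = "walks d N"
  let ?n = "real (card (walks d N))"
  have fw: "finite ?W" "?W \<noteq> {}" using finite_walks[OF d] by auto
  have fK: "finite ?K" using fw by simp
  have RNe: "RN d c h N = (\<lambda>\<omega>. \<Sum>p\<in>?K. beta c d N p * chi h (sig p) \<omega>)"
    by (rule ext) (rule RN_expand[OF d])
  show "RN d c h N \<in> borel_measurable Q" unfolding RNe by measurable
  show "integrable Q (\<lambda>\<omega>. (RN d c h N \<omega>)\<^sup>2)"
    unfolding RNe by (rule second_moment(1)[OF fK sig_I])
  have "integral\<^sup>L Q (\<lambda>\<omega>. (RN d c h N \<omega>)\<^sup>2) =
     (\<Sum>p\<in>?K. \<Sum>p'\<in>?K. beta c d N p * beta c d N p' * (if sig p = sig p' then 1 else 0))"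
    unfolding RNe by (rule second_moment(2)[OF fK sig_I])
  also have "\<dots> = (\<Sum>A\<in>AA N. \<Sum>w\<in>?W. \<Sum>B\<in>AA N. \<Sum>w'\<in>?W.
      beta c d N (A,w) * beta c d N (B,w') * (if A = B \<and> (\<forall>n\<in>A. w ! n = w' ! n) then 1 else 0))"
    unfolding sum_K sig_eq ..
  also have "\<dots> = (\<Sum>A\<in>AA N. \<Sum>w\<in>?W. \<Sum>w'\<in>?W.
      (c N ^ card A / ?n)\<^sup>2 * (if (\<forall>n\<in>A. w ! n = w' ! n) then 1 else 0))"
  proof (intro sum.cong refl)
    fix A w assume A: "A \<in> AA N"
    have "(\<Sum>B\<in>AA N. \<Sum>w'\<in>?W. beta c d N (A,w) * beta c d N (B,w') * (if A = B \<and> (\<forall>n\<in>A. w ! n = w' ! n) then 1 else 0))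
       = (\<Sum>B\<in>AA N. if A = B then (\<Sum>w'\<in>?W. beta c d N (A,w) * beta c d N (B,w') * (if (\<forall>n\<in>A. w ! n = w' ! n) then 1 else 0)) else 0)"
      by (intro sum.cong refl) auto
    also have "\<dots> = (\<Sum>w'\<in>?W. beta c d N (A,w) * beta c d N (A,w') * (if (\<forall>n\<in>A. w ! n = w' ! n) then 1 else 0))"
      using A by simp
    also have "\<dots> = (\<Sum>w'\<in>?W. (c N ^ card A / ?n)\<^sup>2 * (if (\<forall>n\<in>A. w ! n = w' ! n) then 1 else 0))"
      by (simp add: beta_def power2_eq_square)
    finally show "(\<Sum>B\<in>AA N. \<Sum>w'\<in>?W. beta c d N (A,w) * beta c d N (B,w') * (if A = B \<and> (\<forall>n\<in>A. w ! n = w' ! n) then 1 else 0))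
       = (\<Sum>w'\<in>?W. (c N ^ card A / ?n)\<^sup>2 * (if (\<forall>n\<in>A. w ! n = w' ! n) then 1 else 0))" .
  qed
  also have "\<dots> = (\<Sum>A\<in>AA N. (c N ^ 2) ^ card A * D d N A)"
  proof (intro sum.cong refl)
    fix A
    have "real (card {p \<in> ?W \<times> ?W. \<forall>n\<in>A. fst p ! n = snd p ! n}) = (\<Sum>p\<in>?W \<times> ?W. if (\<forall>n\<in>A. fst p ! n = snd p ! n) then 1 else 0::real)"
      using fw by (simp add: sum.inter_filter[symmetric])
    then have "real (card {p \<in> ?W \<times> ?W. \<forall>n\<in>A. fst p ! n = snd p ! n}) = (\<Sum>w\<in>?W. \<Sum>w'\<in>?W. if (\<forall>n\<in>A. w ! n = w' ! n) then 1 else 0)"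
      by (simp add: sum_K)
    then show "(\<Sum>w\<in>?W. \<Sum>w'\<in>?W. (c N ^ card A / ?n)\<^sup>2 * (if (\<forall>n\<in>A. w ! n = w' ! n) then 1 else 0))
       = (c N ^ 2) ^ card A * D d N A"
    proof -
      assume cnt: "real (card {p \<in> ?W \<times> ?W. \<forall>n\<in>A. fst p ! n = snd p ! n}) = (\<Sum>w\<in>?W. \<Sum>w'\<in>?W. if (\<forall>n\<in>A. w ! n = w' ! n) then 1 else 0)"
      have "(\<Sum>w\<in>?W. \<Sum>w'\<in>?W. (c N ^ card A / ?n)\<^sup>2 * (if (\<forall>n\<in>A. w ! n = w' ! n) then 1 else 0))
         = (c N ^ card A / ?n)\<^sup>2 * (\<Sum>w\<in>?W. \<Sum>w'\<in>?W. (if (\<forall>n\<in>A. w ! n = w' ! n) then 1 else 0))"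
        by (simp only: sum_distrib_left)
      also have "\<dots> = (c N ^ 2) ^ card A * D d N A"
        unfolding D_count[OF d] cnt[symmetric] by (simp add: power_divide power_mult[symmetric] mult.commute)
      finally show ?thesis .
    qed
  qed
  finally show "integral\<^sup>L Q (\<lambda>\<omega>. (RN d c h N \<omega>)\<^sup>2) = (\<Sum>A\<in>AA N. (c N ^ 2) ^ card A * D d N A)" .
qed

end


lemma sum_inv_sqrt: "(\<Sum>a\<in>{1..N}. 1 / sqrt (real a)) \<le> 2 * sqrt (real N)"
proof (induction N)
  case 0 then show ?case by simp
next
  case (Suc N)
  define s where "s = sqrt (real N)"
  define t where "t = sqrt (real N + 1)"
  have s0: "s \<ge> 0" and t0: "t > 0" by (auto simp: s_def t_def)
  have ts: "t^2 = s^2 + 1" by (simp add: s_def t_def)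
  have "(s * t)^2 \<le> (s^2 + 1/2)^2" using ts by (simp add: power_mult_distrib power2_eq_square algebra_simps)
  moreover have "0 \<le> s^2 + 1/2" by simp
  ultimately have st: "s * t \<le> s^2 + 1/2" by (rule power2_le_imp_le)
  have "1 / t \<le> 2 * t - 2 * s"
  proof -
    have "1 \<le> (2 * t - 2 * s) * t" using st ts by (simp add: algebra_simps power2_eq_square)
    then show ?thesis using t0 by (simp add: divide_le_eq)
  qed
  have "(\<Sum>a\<in>{1..Suc N}. 1 / sqrt (real a)) = (\<Sum>a\<in>{1..N}. 1 / sqrt (real a)) + 1 / t"
    by (simp add: t_def add.commute)
  also have "\<dots> \<le> 2 * s + 1 / t" using Suc by (simp add: s_def)
  also have "\<dots> \<le> 2 * t" using \<open>1 / t \<le> 2 * t - 2 * s\<close> by simp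
  finally show ?case by (simp add: t_def add.commute)
qed

lemma sum_inv: "(\<Sum>a\<in>{1..N}. 1 / real a) \<le> 1 + ln (real N)"
proof (induction N)
  case 0 then show ?case by simp
next
  case (Suc N)
  show ?case
  proof (cases "N = 0")
    case True then show ?thesis by simp
  next
    case False
    then have N0: "real N > 0" by simp
    have "ln (real N / (real N + 1)) \<le> real N / (real N + 1) - 1"
      by (rule ln_le_minus_one) (use N0 in simp)
    then have "ln (real N) - ln (real N + 1) \<le> - 1 / (real N + 1)"
      using N0 by (simp add: ln_div field_simps)
    then have "1 / real (Suc N) \<le> ln (real (Suc N)) - ln (real N)" by (simp add: add.commute)
    moreover have "(\<Sum>a\<in>{1..Suc N}. 1 / real a) = (\<Sum>a\<in>{1..N}. 1 / real a) + 1 / real (Suc N)"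
      by simp
    ultimately show ?thesis using Suc by simp
  qed
qed

lemma G1_bound: "(\<Sum>a\<in>{1..N}. D 1 a {a}) \<le> 2 * sqrt (real N)"
proof -
  have "D 1 a {a} \<le> 1 / sqrt (real a)" if "a \<in> {1..N}" for a
  proof -
    have "1 / (3 * real a + 1) \<le> 1 / real a" using that by (simp add: divide_simps)
    then have "(cb a)^2 \<le> 1 / real a" using cb_bound[of a] by linarith
    then have "sqrt ((cb a)^2) \<le> sqrt (1 / real a)" by (rule real_sqrt_le_mono)
    then show ?thesis using cb_nonneg[of a] unfolding q1 by (simp add: real_sqrt_divide)
  qed
  then have "(\<Sum>a\<in>{1..N}. D 1 a {a}) \<le> (\<Sum>a\<in>{1..N}. 1 / sqrt (real a))" by (rule sum_mono)
  also have "\<dots> \<le> 2 * sqrt (real N)" by (rule sum_inv_sqrt)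
  finally show ?thesis .
qed

lemma G2_bound: "(\<Sum>a\<in>{1..N}. D 2 a {a}) \<le> 1 + ln (real N)"
proof -
  have "D 2 a {a} \<le> 1 / real a" if "a \<in> {1..N}" for a
  proof -
    have "1 / (3 * real a + 1) \<le> 1 / real a" using that by (simp add: divide_simps)
    then show ?thesis using cb_bound[of a] unfolding q2 by linarith
  qed
  then have "(\<Sum>a\<in>{1..N}. D 2 a {a}) \<le> (\<Sum>a\<in>{1..N}. 1 / real a)" by (rule sum_mono)
  also have "\<dots> \<le> 1 + ln (real N)" by (rule sum_inv)
  finally show ?thesis .
qed

lemma cdf_return0: "cdf (return borel (0::real)) y = (if 0 \<le> y then 1 else 0)"
  unfolding cdf_def by (subst measure_return) (auto simp: indicator_def)

lemma not_isCont_cdf0: "\<not> isCont (cdf (return borel (0::real))) 0"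
proof
  assume c: "isCont (cdf (return borel (0::real))) 0"
  have s: "(\<lambda>n. - inverse (real (Suc n))) \<longlonglongrightarrow> 0"
    using tendsto_minus[OF LIMSEQ_inverse_real_of_nat] by simp
  have "(\<lambda>n. cdf (return borel (0::real)) (- inverse (real (Suc n)))) \<longlonglongrightarrow> cdf (return borel 0) 0"
    by (rule isCont_tendsto_compose[OF c s])
  moreover have "(\<lambda>n. cdf (return borel (0::real)) (- inverse (real (Suc n)))) = (\<lambda>n. 0)"
    by (rule ext) (simp add: cdf_return0)
  ultimately have "(\<lambda>n. 0::real) \<longlonglongrightarrow> 1" by (simp add: cdf_return0)
  then show False using LIMSEQ_unique[OF tendsto_const] by fastforce
qed

lemma to_weak:
  assumes Q: "prob_space Q" and meas: "\<And>N. f N \<in> borel_measurable Q"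
    and conv: "\<And>e. e > 0 \<Longrightarrow> (\<lambda>N. measure Q {\<omega> \<in> space Q. e \<le> \<bar>f N \<omega>\<bar>}) \<longlonglongrightarrow> 0"
  shows "weak_conv_m (\<lambda>N. distr Q borel (f N)) (return borel 0)"
  unfolding weak_conv_m_def weak_conv_def
proof (intro allI impI)
  interpret prob_space Q by (rule Q)
  fix x :: real assume c: "isCont (cdf (return borel 0)) x"
  have cd: "cdf (distr Q borel (f N)) x = prob {\<omega> \<in> space Q. f N \<omega> \<le> x}" for N
    unfolding cdf_def using meas[of N] by (subst measure_distr) (auto intro!: arg_cong[where f=prob])
  have meas_set: "{\<omega> \<in> space Q. P (f N \<omega>)} \<in> events" if "Measurable.pred borel P" for P N
    using meas[of N] that by measurable
  show "(\<lambda>N. cdf (distr Q borel (f N)) x) \<longlonglongrightarrow> cdf (return borel 0) x"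
  proof (cases "x < 0")
    case True
    have "(\<lambda>N. prob {\<omega> \<in> space Q. f N \<omega> \<le> x}) \<longlonglongrightarrow> 0"
    proof (rule tendsto_sandwich[OF _ _ tendsto_const conv])
      show "\<forall>\<^sub>F N in sequentially. 0 \<le> prob {\<omega> \<in> space Q. f N \<omega> \<le> x}" by simp
      show "\<forall>\<^sub>F N in sequentially. prob {\<omega> \<in> space Q. f N \<omega> \<le> x} \<le> prob {\<omega> \<in> space Q. - x \<le> \<bar>f N \<omega>\<bar>}"
        using True by (intro always_eventually allI finite_measure_mono meas_set) auto
      show "- x > 0" using True by simp
    qed
    then show ?thesis using True by (simp add: cd cdf_return0)
  next
    case False
    then have x0: "x > 0" using c not_isCont_cdf0 by (cases "x = 0") auto
    have "(\<lambda>N. prob {\<omega> \<in> space Q. x < f N \<omega>}) \<longlonglongrightarrow> 0"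
    proof (rule tendsto_sandwich[OF _ _ tendsto_const conv])
      show "\<forall>\<^sub>F N in sequentially. 0 \<le> prob {\<omega> \<in> space Q. x < f N \<omega>}" by simp
      show "\<forall>\<^sub>F N in sequentially. prob {\<omega> \<in> space Q. x < f N \<omega>} \<le> prob {\<omega> \<in> space Q. x \<le> \<bar>f N \<omega>\<bar>}"
        using x0 by (intro always_eventually allI finite_measure_mono meas_set) auto
      show "x > 0" by (rule x0)
    qed
    then have lim1: "(\<lambda>N. 1 - prob {\<omega> \<in> space Q. x < f N \<omega>}) \<longlonglongrightarrow> 1 - 0"
      by (intro tendsto_intros)
    have eq1: "prob {\<omega> \<in> space Q. f N \<omega> \<le> x} = 1 - prob {\<omega> \<in> space Q. x < f N \<omega>}" for N
    proof -
      have "prob {\<omega> \<in> space Q. f N \<omega> \<le> x} + prob {\<omega> \<in> space Q. x < f N \<omega>} = prob (space Q)"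
        by (subst finite_measure_Union[symmetric]) (auto intro!: meas_set arg_cong[where f=prob])
      then show ?thesis by (simp add: prob_space)
    qed
    have "(\<lambda>N. prob {\<omega> \<in> space Q. f N \<omega> \<le> x}) \<longlonglongrightarrow> 1 - 0"
      unfolding eq1 by (rule lim1)
    then show ?thesis using x0 by (simp add: cd cdf_return0)
  qed
qed

lemma moment_to_prob:
  fixes f :: "nat \<Rightarrow> 'a \<Rightarrow> real"
  assumes Q: "prob_space Q" and meas: "\<And>N. f N \<in> borel_measurable Q"
    and int: "\<And>N. integrable Q (\<lambda>\<omega>. (f N \<omega>)\<^sup>2)"
    and lim: "(\<lambda>N. integral\<^sup>L Q (\<lambda>\<omega>. (f N \<omega>)\<^sup>2)) \<longlonglongrightarrow> 0"
    and e: "e > 0"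
  shows "(\<lambda>N. measure Q {\<omega> \<in> space Q. e \<le> \<bar>f N \<omega>\<bar>}) \<longlonglongrightarrow> 0"
proof -
  interpret prob_space Q by (rule Q)
  have l2: "(\<lambda>N. integral\<^sup>L Q (\<lambda>\<omega>. (f N \<omega>)\<^sup>2) / e\<^sup>2) \<longlonglongrightarrow> 0 / e\<^sup>2"
    by (rule tendsto_divide[OF lim tendsto_const]) (use e in simp)
  have b: "prob {\<omega> \<in> space Q. e \<le> \<bar>f N \<omega>\<bar>} \<le> integral\<^sup>L Q (\<lambda>\<omega>. (f N \<omega>)\<^sup>2) / e\<^sup>2" for N
    by (rule second_moment_method[OF meas int e])
  show ?thesis
  proof (rule tendsto_sandwich[OF _ _ tendsto_const])
    show "\<forall>\<^sub>F N in sequentially. 0 \<le> prob {\<omega> \<in> space Q. e \<le> \<bar>f N \<omega>\<bar>}" by simp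
    show "\<forall>\<^sub>F N in sequentially. prob {\<omega> \<in> space Q. e \<le> \<bar>f N \<omega>\<bar>} \<le> integral\<^sup>L Q (\<lambda>\<omega>. (f N \<omega>)\<^sup>2) / e\<^sup>2"
      using b by (intro always_eventually allI)
    show "(\<lambda>N. integral\<^sup>L Q (\<lambda>\<omega>. (f N \<omega>)\<^sup>2) / e\<^sup>2) \<longlonglongrightarrow> 0" using l2 by simp
  qed
qed


theorem proposition31:
  fixes Q :: "'w measure" and h :: "nat \<Rightarrow> int list \<Rightarrow> 'w \<Rightarrow> real"
    and c :: "nat \<Rightarrow> real" and d :: nat
  assumes d: "d \<in> {1, 2}"
    and Q: "prob_space Q"
    and h_meas: "\<And>n x. h n x \<in> borel_measurable Q"
    and h_indep: "prob_space.indep_vars Q (\<lambda>_. borel) (\<lambda>(n, x). h n x) {(n, x). length x = d}"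
    and h_plus: "\<And>n x. length x = d \<Longrightarrow> measure Q {\<omega> \<in> space Q. h n x \<omega> = 1} = 1/2"
    and h_minus: "\<And>n x. length x = d \<Longrightarrow> measure Q {\<omega> \<in> space Q. h n x \<omega> = -1} = 1/2"
    and c_pos: "\<And>N. c N > 0"
    and c1: "d = 1 \<Longrightarrow> (\<lambda>N. (c N)\<^sup>2 * real N powr (1/2)) \<longlonglongrightarrow> 0"
    and c2: "d = 2 \<Longrightarrow> (\<lambda>N. (c N)\<^sup>2 * ln (real N)) \<longlonglongrightarrow> 0"
  shows "weak_conv_m (\<lambda>N. distr Q borel (\<lambda>\<omega>. aN d c N * RN d c h N \<omega>)) (return borel 0)"
proof -
  interpret env Q h d
    using Q h_meas h_indep h_plus h_minus by (simp add: env_def env_axioms_def)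
  define u where "u N = (if d = 1 then (c N)\<^sup>2 * real N powr (1/2) else (c N)\<^sup>2 * ln (real N))" for N
  define K :: real where "K = (if d = 1 then 2 else 3)"
  define G where "G N = (\<Sum>a\<in>{1..N}. D d a {a})" for N
  define T where "T N = (\<Sum>A\<in>AA N. (c N ^ 2) ^ card A * D d N A)" for N
  have K0: "K > 0" by (simp add: K_def)
  have u0: "u \<longlonglongrightarrow> 0"
  proof (cases "d = 1")
    case True then show ?thesis using c1 by (simp add: u_def[abs_def])
  next
    case False then have "d = 2" using d by auto
    then show ?thesis using c2 by (simp add: u_def[abs_def])
  qed
  have upos: "u N > 0" if "N \<ge> 2" for N
    using that c_pos[of N] by (auto simp: u_def)
  have aN: "(aN d c N)\<^sup>2 = 1 / u N" if "N \<ge> 2" for N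
  proof -
    have "aN d c N = u N powr (-1/2)" by (simp add: aN_def u_def)
    then have "(aN d c N)\<^sup>2 = u N powr (-1/2) * u N powr (-1/2)" by (simp add: power2_eq_square)
    also have "\<dots> = u N powr (-1)" by (simp add: powr_add[symmetric])
    also have "\<dots> = 1 / u N" using upos[OF that] by (simp add: powr_minus_divide)
    finally show ?thesis .
  qed
  have G0: "G N \<ge> 0" for N by (simp add: G_def D_nonneg sum_nonneg)
  have GK: "(c N)\<^sup>2 * G N \<le> K * u N" if "N \<ge> 2" for N
  proof (cases "d = 1")
    case True
    have "G N \<le> 2 * real N powr (1/2)" using G1_bound[of N] True by (simp add: G_def powr_half_sqrt)
    then have "(c N)\<^sup>2 * G N \<le> (c N)\<^sup>2 * (2 * real N powr (1/2))" by (rule mult_left_mono) simp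
    then show ?thesis using True by (simp add: K_def u_def)
  next
    case False then have d2: "d = 2" using d by auto
    have "ln (real N) \<ge> ln 2" using that by simp
    then have "ln (real N) \<ge> 2/3" using ln2_ge_two_thirds by linarith
    then have "G N \<le> 3 * ln (real N)" using G2_bound[of N] d2 by (simp add: G_def)
    then have "(c N)\<^sup>2 * G N \<le> (c N)\<^sup>2 * (3 * ln (real N))" by (rule mult_left_mono) simp
    then show ?thesis using d2 by (simp add: K_def u_def)
  qed
  have Tb: "T N \<le> 2 * K^2 * (u N)\<^sup>2" if "N \<ge> 2" "K * u N \<le> 1/2" for N
  proof -
    define x where "x = (c N)\<^sup>2 * G N"
    have x0: "x \<ge> 0" using G0 by (simp add: x_def)
    have xK: "x \<le> K * u N" using GK[OF that(1)] by (simp add: x_def)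
    have x1: "x \<le> 1/2" using xK that(2) by simp
    have "T N \<le> x\<^sup>2 / (1 - x)"
      using T_bound[OF d, of "c N ^ 2" N] x1 unfolding T_def AA_def x_def G_def by simp
    also have "\<dots> \<le> x\<^sup>2 / (1/2)" using x1 by (intro divide_left_mono) auto
    also have "\<dots> = 2 * x\<^sup>2" by simp
    also have "\<dots> \<le> 2 * (K * u N)\<^sup>2" using x0 xK by (intro mult_left_mono power_mono) auto
    finally show ?thesis by (simp add: power_mult_distrib)
  qed
  define f where "f N \<omega> = aN d c N * RN d c h N \<omega>" for N \<omega>
  have fm: "f N \<in> borel_measurable Q" for N
    using RN_moment(3)[OF d, of c N] unfolding f_def[abs_def] by measurable
  have fsq: "(\<lambda>\<omega>. (f N \<omega>)\<^sup>2) = (\<lambda>\<omega>. (aN d c N)\<^sup>2 * (RN d c h N \<omega>)\<^sup>2)" for N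
    by (simp add: f_def[abs_def] power_mult_distrib)
  have fi: "integrable Q (\<lambda>\<omega>. (f N \<omega>)\<^sup>2)" for N
    unfolding fsq using RN_moment(1)[OF d, of c N] by simp
  have fint: "integral\<^sup>L Q (\<lambda>\<omega>. (f N \<omega>)\<^sup>2) = (aN d c N)\<^sup>2 * T N" for N
    unfolding fsq T_def using RN_moment(2)[OF d, of c N] by simp
  have lim: "(\<lambda>N. integral\<^sup>L Q (\<lambda>\<omega>. (f N \<omega>)\<^sup>2)) \<longlonglongrightarrow> 0"
  proof (rule tendsto_sandwich[OF _ _ tendsto_const])
    show "\<forall>\<^sub>F N in sequentially. 0 \<le> integral\<^sup>L Q (\<lambda>\<omega>. (f N \<omega>)\<^sup>2)"
      by (intro always_eventually allI integral_nonneg_AE) auto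
    have "\<forall>\<^sub>F N in sequentially. K * u N \<le> 1/2"
    proof -
      have "((\<lambda>N. K * u N) \<longlongrightarrow> K * 0) sequentially" by (intro tendsto_intros u0)
      then have "\<forall>\<^sub>F N in sequentially. K * u N < 1/2" by (intro order_tendstoD) auto
      then show ?thesis by eventually_elim simp
    qed
    moreover have "\<forall>\<^sub>F N in sequentially. N \<ge> 2" by (rule eventually_ge_at_top)
    ultimately show "\<forall>\<^sub>F N in sequentially. integral\<^sup>L Q (\<lambda>\<omega>. (f N \<omega>)\<^sup>2) \<le> 2 * K^2 * u N"
    proof eventually_elim
      case (elim N)
      have "integral\<^sup>L Q (\<lambda>\<omega>. (f N \<omega>)\<^sup>2) = T N / u N" using aN[OF elim(2)] by (simp add: fint)
      also have "\<dots> \<le> 2 * K^2 * (u N)\<^sup>2 / u N"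
        using Tb[OF elim(2) elim(1)] upos[OF elim(2)] by (intro divide_right_mono) auto
      also have "\<dots> = 2 * K^2 * u N" using upos[OF elim(2)] by (simp add: power2_eq_square)
      finally show ?case .
    qed
    show "(\<lambda>N. 2 * K^2 * u N) \<longlonglongrightarrow> 0" using tendsto_mult[OF tendsto_const u0, of "2 * K^2"] by simp
  qed
  have "weak_conv_m (\<lambda>N. distr Q borel (f N)) (return borel 0)"
    by (rule to_weak[OF Q fm moment_to_prob[OF Q fm fi lim]])
  then show ?thesis by (simp add: f_def[abs_def])
qed


end
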